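(* Let $G$ be a connected nontrivial graph with $m$ vertices and let $n\geq3$. Then $$\lambda'(G\boxtimes C_n)=\min\{3n\lambda(G),\ 2(m+2e(G)),\ 6\delta(G)+2\}.$$
   Context: All graphs are finite, simple and undirected; "nontrivial" means having at least two vertices. $C_n$ denotes the cycle on $n$ vertices. For a graph $G$: $e(G)=|E(G)|$; $\delta(G)$ is the minimum degree; $\lambda(G)$ is the edge-connectivity. A restricted edge-cut of a connected graph $G$ is a set $S\subseteq E(G)$ such that $G-S$ is disconnected and every component of $G-S$ has at least $2$ vertices; the restricted edge-connectivity $\lambda'(G)$ is the minimum cardinality of a restricted edge-cut. The strong product $G\boxtimes H$ has vertex set $V(G)\times V(H)$, with $(x_1,y_1)$ and $(x_2,y_2)$ adjacent iff either $x_1=x_2$ and $y_1y_2\in E(H)$, or $y_1=y_2$ and $x_1x_2\in E(G)$, or $x_1x_2\in E(G)$ and $y_1y_2\in E(H)$. *)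

theory Defs
  imports Main
begin

definition graph :: "'a set \<Rightarrow> 'a set set \<Rightarrow> bool" where
  "graph V E \<longleftrightarrow> finite V \<and>
     (\<forall>e\<in>E. \<exists>x y. x \<in> V \<and> y \<in> V \<and> x \<noteq> y \<and> e = {x, y})"

definition edge_rel :: "'a set set \<Rightarrow> ('a \<times> 'a) set" where
  "edge_rel E = {(u, v). {u, v} \<in> E}"

definition reachable :: "'a set set \<Rightarrow> 'a \<Rightarrow> 'a \<Rightarrow> bool" where
  "reachable E u v \<longleftrightarrow> (u, v) \<in> (edge_rel E)\<^sup>*"

definition connected :: "'a set \<Rightarrow> 'a set set \<Rightarrow> bool" where
  "connected V E \<longleftrightarrow> V \<noteq> {} \<and> (\<forall>u\<in>V. \<forall>v\<in>V. reachable E u v)"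

definition degree :: "'a set set \<Rightarrow> 'a \<Rightarrow> nat" where
  "degree E v = card {e \<in> E. v \<in> e}"

definition min_degree :: "'a set \<Rightarrow> 'a set set \<Rightarrow> nat" where
  "min_degree V E = Min (degree E ` V)"

definition edge_cut :: "'a set \<Rightarrow> 'a set set \<Rightarrow> 'a set set \<Rightarrow> bool" where
  "edge_cut V E S \<longleftrightarrow> S \<subseteq> E \<and> \<not> connected V (E - S)"

definition edge_conn :: "'a set \<Rightarrow> 'a set set \<Rightarrow> nat" where
  "edge_conn V E = Min {card S | S. edge_cut V E S}"

text \<open>Restricted edge-cut: G - S disconnected and every component of G - S
  has at least two vertices.\<close>
definition restricted_edge_cut :: "'a set \<Rightarrow> 'a set set \<Rightarrow> 'a set set \<Rightarrow> bool" where
  "restricted_edge_cut V E S \<longleftrightarrow> S \<subseteq> E \<and> \<not> connected V (E - S) \<and>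
     (\<forall>u\<in>V. \<exists>v\<in>V. v \<noteq> u \<and> reachable (E - S) u v)"

definition restricted_edge_conn :: "'a set \<Rightarrow> 'a set set \<Rightarrow> nat" where
  "restricted_edge_conn V E = Min {card S | S. restricted_edge_cut V E S}"

definition sp_verts :: "'a set \<Rightarrow> 'b set \<Rightarrow> ('a \<times> 'b) set" where
  "sp_verts V1 V2 = V1 \<times> V2"

definition sp_edges :: "'a set \<Rightarrow> 'a set set \<Rightarrow> 'b set \<Rightarrow> 'b set set \<Rightarrow> ('a \<times> 'b) set set" where
  "sp_edges V1 E1 V2 E2 = {{(x1, y1), (x2, y2)} | x1 y1 x2 y2.
      x1 \<in> V1 \<and> x2 \<in> V1 \<and> y1 \<in> V2 \<and> y2 \<in> V2 \<and>
      ((x1 = x2 \<and> {y1, y2} \<in> E2) \<or> (y1 = y2 \<and> {x1, x2} \<in> E1) \<or>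
       ({x1, x2} \<in> E1 \<and> {y1, y2} \<in> E2))}"

definition cycle_verts :: "nat \<Rightarrow> nat set" where
  "cycle_verts n = {0..<n}"

definition cycle_edges :: "nat \<Rightarrow> nat set set" where
  "cycle_edges n = {{i, (i + 1) mod n} | i. i < n}"

end

theory Submission
  imports Defs
begin

lemma suc_mod: "i < n \<Longrightarrow> Suc i mod n = (if Suc i = n then 0 else Suc i)"
  by auto

locale SP =
  fixes V :: "'a set" and E :: "'a set set" and n :: nat
  assumes G: "graph V E" and n3: "3 \<le> n"
begin

abbreviation "VH \<equiv> sp_verts V (cycle_verts n)"
abbreviation "EH \<equiv> sp_edges V E (cycle_verts n) (cycle_edges n)"

definition cadj :: "nat \<Rightarrow> nat \<Rightarrow> bool" where
  "cadj i j \<longleftrightarrow> i < n \<and> j < n \<and> (j = Suc i mod n \<or> i = Suc j mod n)"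

definition hadj :: "'a \<times> nat \<Rightarrow> 'a \<times> nat \<Rightarrow> bool" where
  "hadj p q \<longleftrightarrow> fst p \<in> V \<and> fst q \<in> V \<and> snd p < n \<and> snd q < n \<and>
     ((fst p = fst q \<and> cadj (snd p) (snd q)) \<or> (snd p = snd q \<and> {fst p, fst q} \<in> E) \<or>
      ({fst p, fst q} \<in> E \<and> cadj (snd p) (snd q)))"

lemma finV: "finite V" using G unfolding graph_def by auto

lemma E_two: "e \<in> E \<Longrightarrow> \<exists>x y. x \<in> V \<and> y \<in> V \<and> x \<noteq> y \<and> e = {x,y}"
  using G unfolding graph_def by auto

lemma E_noloop: "{x} \<notin> E"
proof
  assume "{x} \<in> E"
  then obtain a b where ab: "a \<noteq> b" "{x} = {a,b}" using E_two[of "{x}"] by auto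
  have "a = x" "b = x" using ab(2) by (auto simp: set_eq_iff)
  then show False using ab(1) by simp
qed

lemma E_V: "{x,y} \<in> E \<Longrightarrow> x \<in> V \<and> y \<in> V"
proof -
  assume "{x,y} \<in> E"
  then obtain a b where ab: "a \<in> V" "b \<in> V" "{x,y} = {a,b}" using E_two[of "{x,y}"] by auto
  have "x \<in> {a,b}" "y \<in> {a,b}" using ab(3) by (auto simp: set_eq_iff)
  then show ?thesis using ab by auto
qed

lemma finE: "finite E"
proof -
  have "E \<subseteq> Pow V"
  proof
    fix e assume "e \<in> E"
    then obtain x y where "x \<in> V" "y \<in> V" "e = {x,y}" using E_two[of e] by auto
    then show "e \<in> Pow V" by auto
  qed
  moreover have "finite (Pow V)" using finV by simp
  ultimately show ?thesis by (rule finite_subset)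
qed

lemma cadj_sym: "cadj i j \<longleftrightarrow> cadj j i" unfolding cadj_def by auto

lemma suc_neq: "i < n \<Longrightarrow> Suc i mod n \<noteq> i"
  using n3 by (auto simp: suc_mod)

lemma suc_suc_neq: "i < n \<Longrightarrow> Suc (Suc i mod n) mod n \<noteq> i"
  using n3 by (auto simp: suc_mod)

lemma suc_lt: "Suc i mod n < n" using n3 by auto

lemma cadj_irr: "\<not> cadj i i" unfolding cadj_def using suc_neq by metis

lemma ce_iff: "{i,j} \<in> cycle_edges n \<longleftrightarrow> cadj i j"
proof
  assume "{i,j} \<in> cycle_edges n"
  then obtain k where k: "k < n" "{i,j} = {k, (k+1) mod n}" unfolding cycle_edges_def by auto
  then show "cadj i j" unfolding cadj_def using n3 by (auto simp: doubleton_eq_iff)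
next
  assume "cadj i j"
  then show "{i,j} \<in> cycle_edges n" unfolding cadj_def cycle_edges_def
    by (auto simp: insert_commute)
qed

lemma hadj_sym: "hadj p q \<longleftrightarrow> hadj q p"
  unfolding hadj_def using cadj_sym by (auto simp: insert_commute)

lemma hadj_neq: "hadj p q \<Longrightarrow> p \<noteq> q"
  unfolding hadj_def using cadj_irr E_noloop by auto

lemma EH_iff: "{p,q} \<in> EH \<longleftrightarrow> hadj p q"
proof
  assume "{p,q} \<in> EH"
  then obtain x1 y1 x2 y2 where e: "{p,q} = {(x1,y1),(x2,y2)}" and
    c: "x1 \<in> V" "x2 \<in> V" "y1 \<in> cycle_verts n" "y2 \<in> cycle_verts n"
      "(x1 = x2 \<and> {y1, y2} \<in> cycle_edges n) \<or> (y1 = y2 \<and> {x1, x2} \<in> E) \<or>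
       ({x1, x2} \<in> E \<and> {y1, y2} \<in> cycle_edges n)"
    unfolding sp_edges_def by blast
  have "hadj (x1,y1) (x2,y2)" using c unfolding hadj_def cycle_verts_def ce_iff by auto
  then show "hadj p q" using e hadj_sym by (auto simp: doubleton_eq_iff)
next
  assume h: "hadj p q"
  obtain x1 y1 x2 y2 where pq: "p = (x1,y1)" "q = (x2,y2)" by fastforce
  show "{p,q} \<in> EH" using h unfolding sp_edges_def pq hadj_def cycle_verts_def ce_iff[symmetric]
    by auto
qed

lemma EH_elem: "c \<in> EH \<Longrightarrow> \<exists>p q. c = {p,q} \<and> hadj p q"
proof -
  assume c: "c \<in> EH"
  then obtain x1 y1 x2 y2 where "c = {(x1,y1),(x2,y2)}" unfolding sp_edges_def by blast
  then show ?thesis using c EH_iff by blast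
qed

lemma hadj_VH: "hadj p q \<Longrightarrow> p \<in> VH \<and> q \<in> VH"
  unfolding hadj_def sp_verts_def cycle_verts_def by (cases p; cases q) auto

lemma finVH: "finite VH" unfolding sp_verts_def cycle_verts_def using finV by auto

lemma finEH: "finite EH"
proof -
  have "EH \<subseteq> Pow VH" using EH_elem hadj_VH by blast
  moreover have "finite (Pow VH)" using finVH by simp
  ultimately show ?thesis by (rule finite_subset)
qed

end

lemma even_ge2: "even (m::nat) \<Longrightarrow> m \<noteq> 0 \<Longrightarrow> 2 \<le> m"
  by (metis One_nat_def Suc_1 Suc_leI le_neq_implies_less odd_one zero_less_iff_neq_zero)

definition sw :: "nat \<Rightarrow> (nat \<Rightarrow> bool) \<Rightarrow> nat set" where
  "sw n h = {i. i < n \<and> h i \<noteq> h (Suc i mod n)}"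

definition sd :: "'b set \<Rightarrow> 'b set \<Rightarrow> 'b set" where
  "sd A B = (A - B) \<union> (B - A)"

lemma path_par: fixes h :: "nat \<Rightarrow> bool" shows "even (card {i. i < k \<and> h i \<noteq> h (Suc i)}) \<longleftrightarrow> h 0 = h k"
proof (induction k)
  case 0 then show ?case by simp
next
  case (Suc k)
  have eq: "{i. i < Suc k \<and> h i \<noteq> h (Suc i)} = {i. i < k \<and> h i \<noteq> h (Suc i)} \<union> {i. i = k \<and> h k \<noteq> h (Suc k)}"
    by (auto simp: less_Suc_eq)
  have c: "card {i. i < Suc k \<and> h i \<noteq> h (Suc i)} = card {i. i < k \<and> h i \<noteq> h (Suc i)} + card {i. i = k \<and> h k \<noteq> h (Suc k)}"
    unfolding eq by (rule card_Un_disjoint) auto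
  show ?case
  proof (cases "h k = h (Suc k)")
    case True
    then have "{i. i = k \<and> h k \<noteq> h (Suc k)} = {}" by auto
    then show ?thesis using c Suc.IH True by simp
  next
    case False
    then have "{i. i = k \<and> h k \<noteq> h (Suc k)} = {k}" by auto
    then have c2: "card {i. i < Suc k \<and> h i \<noteq> h (Suc i)} = Suc (card {i. i < k \<and> h i \<noteq> h (Suc i)})" using c by simp
    have b: "(h 0 = h k) = (\<not> h 0 = h (Suc k))" using False by (smt (verit))
    show ?thesis unfolding c2 using Suc.IH b by simp
  qed
qed

lemma sw_even: assumes "0 < n" shows "even (card (sw n h))"
proof -
  have eq: "sw n h = {i. i < n - 1 \<and> h i \<noteq> h (Suc i)} \<union> {i. i = n - 1 \<and> h (n - 1) \<noteq> h 0}"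
  proof (rule set_eqI)
    fix i
    show "i \<in> sw n h \<longleftrightarrow> i \<in> {i. i < n - 1 \<and> h i \<noteq> h (Suc i)} \<union> {i. i = n - 1 \<and> h (n - 1) \<noteq> h 0}"
    proof (cases "i < n - 1")
      case True then have "Suc i mod n = Suc i" by simp
      then show ?thesis using True unfolding sw_def by auto
    next
      case False
      show ?thesis
      proof (cases "i = n - 1")
        case True
        then have "Suc i mod n = 0" using assms by simp
        then show ?thesis using True assms unfolding sw_def by auto
      next
        case False
        then show ?thesis using \<open>\<not> i < n - 1\<close> unfolding sw_def by auto
      qed
    qed
  qed
  have c: "card (sw n h) = card {i. i < n - 1 \<and> h i \<noteq> h (Suc i)} + card {i. i = n - 1 \<and> h (n - 1) \<noteq> h 0}"
    unfolding eq by (rule card_Un_disjoint) auto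
  show ?thesis
  proof (cases "h (n - 1) = h 0")
    case True
    then have "{i. i = n - 1 \<and> h (n - 1) \<noteq> h 0} = {}" by auto
    then show ?thesis using c path_par[of "n - 1" h] True by simp
  next
    case False
    then have "{i. i = n - 1 \<and> h (n - 1) \<noteq> h 0} = {n - 1}" by auto
    then show ?thesis using c path_par[of "n - 1" h] False by auto
  qed
qed

lemma sw_empty_const: assumes "sw n h = {}" "i < n" shows "h i = h 0"
  using assms(2)
proof (induction i)
  case 0 then show ?case by simp
next
  case (Suc i)
  then have "i \<notin> sw n h" using assms(1) by auto
  then have "h i = h (Suc i mod n)" using Suc.prems unfolding sw_def by auto
  moreover have "Suc i mod n = Suc i" using Suc.prems by simp
  ultimately show ?case using Suc by simp
qed

lemma sw_fin: "finite (sw n h)" unfolding sw_def by auto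

lemma sw_ge2: assumes "i < n" "j < n" "h i \<noteq> h j" shows "2 \<le> card (sw n h)"
proof -
  have "sw n h \<noteq> {}" using sw_empty_const[of n h i] sw_empty_const[of n h j] assms by auto
  then have "card (sw n h) \<noteq> 0" using sw_fin by auto
  moreover have "even (card (sw n h))" using sw_even assms by auto
  ultimately show ?thesis using even_ge2 by blast
qed

lemma abs4:
  fixes D Su Sv Sh :: "nat set"
  assumes fin: "finite D" "finite Su" "finite Sv"
    and ev: "even (card Su)" "even (card Sv)" and ne: "Su \<noteq> {}" "Sv \<noteq> {}"
    and Sh: "Sh = sd Su Sv" and evh: "even (card Sh)"
    and n3: "3 \<le> n" and DU: "D \<subseteq> {..<n}"
    and h1: "D \<noteq> {} \<Longrightarrow> D \<noteq> {..<n} \<Longrightarrow> Sh \<noteq> {}"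
    and h2: "D = {..<n} \<Longrightarrow> Sh = {}"
    and h3: "\<And>a. D = {a} \<Longrightarrow> a \<in> Sh"
  shows "4 \<le> card D + card (sd D Sv) + card (sd D Su)"
proof -
  have cu: "2 \<le> card Su" using ev(1) ne(1) fin(2) by (metis card_0_eq dvd_imp_le even_zero not_less_eq_eq numeral_2_eq_2 zero_less_iff_neq_zero)
  have cv: "2 \<le> card Sv" using ev(2) ne(2) fin(3) by (metis card_0_eq dvd_imp_le even_zero not_less_eq_eq numeral_2_eq_2 zero_less_iff_neq_zero)
  have fsd: "finite (sd D Su)" "finite (sd D Sv)" "finite Sh" using fin Sh unfolding sd_def by auto
  have subu: "Su \<subseteq> D \<union> sd D Su" unfolding sd_def by auto
  have subv: "Sv \<subseteq> D \<union> sd D Sv" unfolding sd_def by auto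
  have cu2: "card Su \<le> card D + card (sd D Su)"
    using card_mono[OF _ subu] card_Un_le[of D "sd D Su"] fin fsd by auto
  show ?thesis
  proof (cases "D = {}")
    case True
    then have "sd D Sv = Sv" "sd D Su = Su" unfolding sd_def by auto
    then show ?thesis using cu cv by simp
  next
    case Dne: False
    show ?thesis
    proof (cases "D = {..<n}")
      case True
      then have "Sh = {}" using h2 by simp
      then have SuSv: "Su = Sv" using Sh unfolding sd_def by auto
      have cD: "card D = n" using True by simp
      show ?thesis
      proof (cases "sd D Su = {}")
        case True
        then have "Su = D" unfolding sd_def by auto
        then have "card Su = n" using cD by simp
        then have "n \<noteq> 3" using ev(1) by auto
        then show ?thesis using cD n3 by simp
      next
        case False
        then have "card (sd D Su) \<ge> 1" using fsd by (simp add: Suc_leI card_gt_0_iff)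
        then show ?thesis using cD n3 SuSv by simp
      qed
    next
      case DnU: False
      have "Sh \<noteq> {}" using h1 Dne DnU by simp
      then have "card Sh \<noteq> 0" using fsd by simp
      then have cSh: "2 \<le> card Sh" using evh even_ge2 by blast
      have "Sh \<subseteq> sd D Su \<union> sd D Sv" using Sh unfolding sd_def by auto
      then have "card Sh \<le> card (sd D Su) + card (sd D Sv)"
        using card_mono[of "sd D Su \<union> sd D Sv" Sh] card_Un_le[of "sd D Su" "sd D Sv"] fsd by auto
      then have s2: "2 \<le> card (sd D Su) + card (sd D Sv)" using cSh by simp
      have cD1: "1 \<le> card D" using Dne fin(1) by (simp add: Suc_leI card_gt_0_iff)
      show ?thesis
      proof (rule ccontr)
        assume "\<not> ?thesis"
        then have lt: "card D + card (sd D Sv) + card (sd D Su) \<le> 3" by simp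
        then have "card D = 1" using s2 cD1 by simp
        then obtain a where Da: "D = {a}" using card_1_singletonE by blast
        have aSh: "a \<in> Sh" using h3 Da by simp
        have "sd D Su \<noteq> {}"
        proof
          assume "sd D Su = {}"
          then have "Su = D" unfolding sd_def by auto
          then show False using ev(1) Da by simp
        qed
        then have u1: "1 \<le> card (sd D Su)" using fsd by (simp add: Suc_leI card_gt_0_iff)
        have "sd D Sv \<noteq> {}"
        proof
          assume "sd D Sv = {}"
          then have "Sv = D" unfolding sd_def by auto
          then show False using ev(2) Da by simp
        qed
        then have v1: "1 \<le> card (sd D Sv)" using fsd by (simp add: Suc_leI card_gt_0_iff)
        have "card (sd D Su) = 1" using lt u1 v1 \<open>card D = 1\<close> by simp
        then obtain b where bu: "sd D Su = {b}" using card_1_singletonE by blast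
        have "card (sd D Sv) = 1" using lt u1 v1 \<open>card D = 1\<close> by simp
        then obtain c where cv': "sd D Sv = {c}" using card_1_singletonE by blast
        have "a \<in> Su"
        proof (rule ccontr)
          assume "a \<notin> Su"
          then have "a \<in> sd D Su" using Da unfolding sd_def by auto
          then have "b = a" using bu by auto
          then have "Su \<subseteq> {a}" using subu Da bu by auto
          then have "Su = {}" using \<open>a \<notin> Su\<close> by auto
          then show False using ne by simp
        qed
        moreover have "a \<in> Sv"
        proof (rule ccontr)
          assume "a \<notin> Sv"
          then have "a \<in> sd D Sv" using Da unfolding sd_def by auto
          then have "c = a" using cv' by auto
          then have "Sv \<subseteq> {a}" using subv Da cv' by auto
          then have "Sv = {}" using \<open>a \<notin> Sv\<close> by auto
          then show False using ne by simp
        qed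
        ultimately have "a \<notin> Sh" using Sh unfolding sd_def by auto
        then show False using aSh by simp
      qed
    qed
  qed
qed


context SP begin

definition cut :: "('a \<times> nat) set \<Rightarrow> ('a \<times> nat) set set" where
  "cut X = {c \<in> EH. \<exists>p\<in>X. \<exists>q\<in>VH - X. c = {p,q}}"
definition Ce where "Ce X e = {c \<in> cut X. fst ` c = e}"
definition Cv where "Cv X x = {c \<in> cut X. fst ` c = {x}}"

lemma fin_cut: "finite (cut X)"
  using finEH unfolding cut_def by (rule finite_subset[rotated]) auto

lemma cross: assumes "hadj p q" "(p \<in> X) \<noteq> (q \<in> X)" shows "{p,q} \<in> cut X"
proof -
  have e: "{p,q} \<in> EH" using assms(1) EH_iff by simp
  have v: "p \<in> VH" "q \<in> VH" using hadj_VH assms(1) by auto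
  show ?thesis
  proof (cases "p \<in> X")
    case True
    then show ?thesis using e v assms(2) unfolding cut_def by blast
  next
    case False
    then have "q \<in> X" using assms(2) by simp
    then show ?thesis using e v False unfolding cut_def by (auto simp: insert_commute)
  qed
qed

lemma card_cut_ge:
  assumes "W \<subseteq> V" "F \<subseteq> E"
  shows "(\<Sum>x\<in>W. card (Cv X x)) + (\<Sum>e\<in>F. card (Ce X e)) \<le> card (cut X)"
proof -
  have fW: "finite W" using assms(1) finV finite_subset by auto
  have fF: "finite F" using assms(2) finE finite_subset by auto
  have fCv: "\<forall>x\<in>W. finite (Cv X x)" using fin_cut unfolding Cv_def by auto
  have fCe: "\<forall>e\<in>F. finite (Ce X e)" using fin_cut unfolding Ce_def by auto
  have dv: "\<forall>x\<in>W. \<forall>y\<in>W. x \<noteq> y \<longrightarrow> Cv X x \<inter> Cv X y = {}"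
  proof (intro ballI impI)
    fix x y :: 'a assume "x \<noteq> y"
    then show "Cv X x \<inter> Cv X y = {}" unfolding Cv_def by blast
  qed
  have de: "\<forall>x\<in>F. \<forall>y\<in>F. x \<noteq> y \<longrightarrow> Ce X x \<inter> Ce X y = {}"
  proof (intro ballI impI)
    fix x y :: "'a set" assume "x \<noteq> y"
    then show "Ce X x \<inter> Ce X y = {}" unfolding Ce_def by blast
  qed
  have s1: "(\<Sum>x\<in>W. card (Cv X x)) = card (\<Union>x\<in>W. Cv X x)"
    using card_UN_disjoint[OF fW fCv dv] by simp
  have s2: "(\<Sum>e\<in>F. card (Ce X e)) = card (\<Union>e\<in>F. Ce X e)"
    using card_UN_disjoint[OF fF fCe de] by simp
  have dj: "(\<Union>x\<in>W. Cv X x) \<inter> (\<Union>e\<in>F. Ce X e) = {}"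
  proof (rule ccontr)
    assume "\<not> ?thesis"
    then obtain c x e where "x \<in> W" "e \<in> F" "c \<in> Cv X x" "c \<in> Ce X e" by blast
    then have "x \<in> W" "e \<in> F" "fst ` c = {x}" "fst ` c = e"
      unfolding Cv_def Ce_def by auto
    then have "{x} \<in> E" using assms(2) by auto
    then show False using E_noloop by simp
  qed
  have f1: "finite (\<Union>x\<in>W. Cv X x)" using fW fCv by blast
  have f2: "finite (\<Union>e\<in>F. Ce X e)" using fF fCe by blast
  have "card ((\<Union>x\<in>W. Cv X x) \<union> (\<Union>e\<in>F. Ce X e)) = card (\<Union>x\<in>W. Cv X x) + card (\<Union>e\<in>F. Ce X e)"
    by (rule card_Un_disjoint[OF f1 f2 dj])
  moreover have "(\<Union>x\<in>W. Cv X x) \<union> (\<Union>e\<in>F. Ce X e) \<subseteq> cut X"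
    unfolding Cv_def Ce_def by blast
  then have "card ((\<Union>x\<in>W. Cv X x) \<union> (\<Union>e\<in>F. Ce X e)) \<le> card (cut X)"
    by (rule card_mono[OF fin_cut])
  ultimately show ?thesis using s1 s2 by simp
qed
lemma pair_eq: "u \<noteq> v \<Longrightarrow> ({(u,a),(v,b)} = {(u,c),(v,d)}) = (a = c \<and> b = d)"
  by (auto simp: doubleton_eq_iff)

lemma cadj_suc: "i < n \<Longrightarrow> cadj i (Suc i mod n)"
  unfolding cadj_def using suc_lt by auto

lemma col_vert:
  assumes x: "x \<in> V" and ij: "i < n" "j < n" "((x,i) \<in> X) \<noteq> ((x,j) \<in> X)"
  shows "2 \<le> card (Cv X x)"
proof -
  let ?h = "\<lambda>i. (x,i) \<in> X"
  let ?g = "\<lambda>i. {(x,i),(x,Suc i mod n)}"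
  have c2: "2 \<le> card (sw n ?h)" using sw_ge2[of i n j ?h] ij by simp
  have sub: "?g ` sw n ?h \<subseteq> Cv X x"
  proof
    fix c assume "c \<in> ?g ` sw n ?h"
    then obtain k where k: "k < n" "?h k \<noteq> ?h (Suc k mod n)" "c = ?g k" unfolding sw_def by auto
    have "hadj (x,k) (x, Suc k mod n)" unfolding hadj_def using x k(1) suc_lt cadj_suc by auto
    then have "c \<in> cut X" using cross k by simp
    then show "c \<in> Cv X x" unfolding Cv_def using k by auto
  qed
  have inj: "inj_on ?g (sw n ?h)"
  proof (rule inj_onI)
    fix a b assume ab: "a \<in> sw n ?h" "b \<in> sw n ?h" "?g a = ?g b"
    have an: "a < n" "b < n" using ab unfolding sw_def by auto
    show "a = b"
    proof (rule ccontr)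
      assume "a \<noteq> b"
      then have "a = Suc b mod n" "Suc a mod n = b" using ab(3) by (auto simp: doubleton_eq_iff)
      then show False using suc_suc_neq[OF an(2)] by simp
    qed
  qed
  have "card (sw n ?h) = card (?g ` sw n ?h)" using card_image[OF inj] by simp
  also have "\<dots> \<le> card (Cv X x)" using card_mono[OF _ sub] fin_cut unfolding Cv_def by auto
  finally show ?thesis using c2 by simp
qed

lemma col_edge:
  assumes e: "{u,v} \<in> E"
  shows "card {i. i < n \<and> ((u,i) \<in> X) \<noteq> ((v,i) \<in> X)}
       + card {i. i < n \<and> ((u,i) \<in> X) \<noteq> ((v,Suc i mod n) \<in> X)}
       + card {i. i < n \<and> ((u,Suc i mod n) \<in> X) \<noteq> ((v,i) \<in> X)} \<le> card (Ce X {u,v})"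
    (is "card ?D + card ?A + card ?B \<le> _")
proof -
  have uv: "u \<noteq> v" using e E_noloop by auto
  have uvV: "u \<in> V" "v \<in> V" using E_V e by auto
  let ?gD = "\<lambda>i. {(u,i),(v,i)}"
  let ?gA = "\<lambda>i. {(u,i),(v,Suc i mod n)}"
  let ?gB = "\<lambda>i. {(u,Suc i mod n),(v,i)}"
  have injD: "inj_on ?gD ?D"
  proof (rule inj_onI)
    fix a b assume "a \<in> ?D" "b \<in> ?D" "?gD a = ?gD b"
    then show "a = b" by (simp add: pair_eq[OF uv])
  qed
  have injA: "inj_on ?gA ?A"
  proof (rule inj_onI)
    fix a b assume "a \<in> ?A" "b \<in> ?A" "?gA a = ?gA b"
    then show "a = b" by (simp add: pair_eq[OF uv])
  qed
  have injB: "inj_on ?gB ?B"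
  proof (rule inj_onI)
    fix a b assume "a \<in> ?B" "b \<in> ?B" "?gB a = ?gB b"
    then show "a = b" by (simp add: pair_eq[OF uv])
  qed
  have hD: "\<And>i. i < n \<Longrightarrow> hadj (u,i) (v,i)" unfolding hadj_def using uvV e by auto
  have hA: "\<And>i. i < n \<Longrightarrow> hadj (u,i) (v,Suc i mod n)" unfolding hadj_def using uvV e suc_lt cadj_suc by auto
  have hB: "\<And>i. i < n \<Longrightarrow> hadj (u,Suc i mod n) (v,i)"
    unfolding hadj_def using uvV e suc_lt cadj_suc cadj_sym by auto
  have sD: "?gD ` ?D \<subseteq> Ce X {u,v}" unfolding Ce_def using cross hD by auto
  have sA: "?gA ` ?A \<subseteq> Ce X {u,v}" unfolding Ce_def using cross hA by auto
  have sB: "?gB ` ?B \<subseteq> Ce X {u,v}" unfolding Ce_def using cross hB by auto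
  have d1: "?gD ` ?D \<inter> ?gA ` ?A = {}"
  proof (rule ccontr)
    assume "\<not> ?thesis"
    then obtain a b where ab: "a \<in> ?D" "b \<in> ?A" "?gD a = ?gA b" by blast
    have bn: "b < n" using ab(2) by simp
    have "a = b \<and> a = Suc b mod n" using ab(3) unfolding pair_eq[OF uv] .
    then show False using suc_neq[OF bn] by simp
  qed
  have d2: "(?gD ` ?D \<union> ?gA ` ?A) \<inter> ?gB ` ?B = {}"
  proof (rule ccontr)
    assume "\<not> ?thesis"
    then obtain c where c1: "c \<in> ?gD ` ?D \<union> ?gA ` ?A" and c2: "c \<in> ?gB ` ?B" by blast
    from c2 obtain b where b1: "b \<in> ?B" and b2: "c = ?gB b" by (rule imageE)
    from c1 obtain a where a1: "c = ?gD a \<or> c = ?gA a" by blast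
    have ab: "b \<in> ?B" "?gB b = ?gD a \<or> ?gB b = ?gA a" using b1 b2 a1 by simp_all
    have bn: "b < n" using ab(1) by simp
    show False
    proof (cases "?gB b = ?gD a")
      case True
      then have "Suc b mod n = a" "b = a" unfolding pair_eq[OF uv] by blast+
      then show False using suc_neq[OF bn] by simp
    next
      case False
      then have "?gB b = ?gA a" using ab(2) by simp
      then have h1: "Suc b mod n = a" and h2: "b = Suc a mod n" unfolding pair_eq[OF uv] by blast+
      have "Suc (Suc b mod n) mod n = b" unfolding h1 using h2 by (rule sym)
      then show False using suc_suc_neq[OF bn] by simp
    qed
  qed
  have fin: "finite ?D" "finite ?A" "finite ?B" by auto
  have "card (?gD ` ?D \<union> ?gA ` ?A \<union> ?gB ` ?B) = card (?gD ` ?D) + card (?gA ` ?A) + card (?gB ` ?B)"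
    using card_Un_disjoint[OF _ _ d2] card_Un_disjoint[OF _ _ d1] fin by simp
  also have "\<dots> = card ?D + card ?A + card ?B"
    using card_image[OF injD] card_image[OF injA] card_image[OF injB] by simp
  finally have eq: "card (?gD ` ?D \<union> ?gA ` ?A \<union> ?gB ` ?B) = card ?D + card ?A + card ?B" .
  have "card (?gD ` ?D \<union> ?gA ` ?A \<union> ?gB ` ?B) \<le> card (Ce X {u,v})"
    by (rule card_mono) (use fin_cut sD sA sB in \<open>auto simp: Ce_def\<close>)
  then show ?thesis using eq by simp
qed

end

context SP begin

lemma suc_inj: assumes "a < n" "b < n" "Suc a mod n = Suc b mod n" shows "a = b"
proof -
  have "Suc a mod n = (if Suc a = n then 0 else Suc a)" using suc_mod[OF assms(1)] .
  moreover have "Suc b mod n = (if Suc b = n then 0 else Suc b)" using suc_mod[OF assms(2)] .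
  ultimately show ?thesis using assms by (auto split: if_splits)
qed

lemma suc_surj: assumes "j < n" obtains i where "i < n" "Suc i mod n = j"
proof (cases "j = 0")
  case True
  have "Suc (n - 1) mod n = 0" using n3 by simp
  then show ?thesis using that[of "n - 1"] True n3 by simp
next
  case False
  have "Suc (j - 1) mod n = j" using False assms by simp
  then show ?thesis using that[of "j - 1"] assms by simp
qed

lemma col_const:
  assumes e: "{u,v} \<in> E" and c: "\<forall>i<n. ((v,i) \<in> X) = c"
  shows "3 * card {i. i < n \<and> ((u,i) \<in> X) \<noteq> c} \<le> card (Ce X {u,v})"
proof -
  let ?D = "{i. i < n \<and> ((u,i) \<in> X) \<noteq> c}"
  let ?B = "{i. i < n \<and> ((u,Suc i mod n) \<in> X) \<noteq> c}"
  have eD: "{i. i < n \<and> ((u,i) \<in> X) \<noteq> ((v,i) \<in> X)} = ?D" using c by auto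
  have eA: "{i. i < n \<and> ((u,i) \<in> X) \<noteq> ((v,Suc i mod n) \<in> X)} = ?D" using c suc_lt by auto
  have eB: "{i. i < n \<and> ((u,Suc i mod n) \<in> X) \<noteq> ((v,i) \<in> X)} = ?B" using c by auto
  have inj: "inj_on (\<lambda>i. Suc i mod n) ?B"
  proof (rule inj_onI)
    fix a b assume ab: "a \<in> ?B" "b \<in> ?B" "Suc a mod n = Suc b mod n"
    have "a < n" "b < n" using ab(1,2) by simp_all
    then show "a = b" using suc_inj ab(3) by blast
  qed
  have img: "(\<lambda>i. Suc i mod n) ` ?B = ?D"
  proof
    show "(\<lambda>i. Suc i mod n) ` ?B \<subseteq> ?D" using suc_lt by auto
  next
    show "?D \<subseteq> (\<lambda>i. Suc i mod n) ` ?B"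
    proof
      fix j assume j: "j \<in> ?D"
      then have "j < n" by simp
      then obtain i where i: "i < n" "Suc i mod n = j" using suc_surj by blast
      then have "i \<in> ?B" using j by simp
      then show "j \<in> (\<lambda>i. Suc i mod n) ` ?B" using i(2) by blast
    qed
  qed
  have "card ?B = card ?D" using card_image[OF inj] img by simp
  then show ?thesis using col_edge[OF e, of X] eD eA eB by simp
qed

lemma col_mixed:
  assumes e: "{u,v} \<in> E"
    and mu: "i1 < n" "j1 < n" "((u,i1) \<in> X) \<noteq> ((u,j1) \<in> X)"
    and mv: "i2 < n" "j2 < n" "((v,i2) \<in> X) \<noteq> ((v,j2) \<in> X)"
  shows "4 \<le> card (Ce X {u,v})"
proof -
  let ?fu = "\<lambda>i. (u,i) \<in> X"
  let ?fv = "\<lambda>i. (v,i) \<in> X"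
  let ?h = "\<lambda>i. ?fu i \<noteq> ?fv i"
  let ?D = "{i. i < n \<and> ((u,i) \<in> X) \<noteq> ((v,i) \<in> X)}"
  let ?A = "{i. i < n \<and> ((u,i) \<in> X) \<noteq> ((v,Suc i mod n) \<in> X)}"
  let ?B = "{i. i < n \<and> ((u,Suc i mod n) \<in> X) \<noteq> ((v,i) \<in> X)}"
  have eA: "?A = sd ?D (sw n ?fv)" unfolding sd_def sw_def by auto
  have eB: "?B = sd ?D (sw n ?fu)" unfolding sd_def sw_def by auto
  have eh: "sw n ?h = sd (sw n ?fu) (sw n ?fv)" unfolding sd_def sw_def by auto
  have n0: "0 < n" using n3 by simp
  have cu: "2 \<le> card (sw n ?fu)" using sw_ge2[of i1 n j1 ?fu] mu by simp
  have cv: "2 \<le> card (sw n ?fv)" using sw_ge2[of i2 n j2 ?fv] mv by simp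
  have h1: "?D \<noteq> {} \<Longrightarrow> ?D \<noteq> {..<n} \<Longrightarrow> sw n ?h \<noteq> {}"
  proof -
    assume a: "?D \<noteq> {}" "?D \<noteq> {..<n}"
    then obtain i where i: "i < n" "?h i" by auto
    obtain j where j: "j < n" "\<not> ?h j" using a(2) by auto
    have "2 \<le> card (sw n ?h)" using sw_ge2[of i n j ?h] i j by simp
    then show ?thesis by auto
  qed
  have h2: "?D = {..<n} \<Longrightarrow> sw n ?h = {}"
  proof -
    assume a: "?D = {..<n}"
    have all: "\<And>i. i < n \<Longrightarrow> ?h i"
    proof -
      fix i assume "i < n"
      then have "i \<in> ?D" using a by simp
      then show "?h i" by simp
    qed
    show ?thesis unfolding sw_def using all suc_lt by auto
  qed
  have h3: "\<And>a. ?D = {a} \<Longrightarrow> a \<in> sw n ?h"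
  proof -
    fix a assume a: "?D = {a}"
    then have an: "a < n" "?h a" by (auto simp: set_eq_iff)
    have "Suc a mod n \<notin> ?D" using a suc_neq[OF an(1)] by auto
    then have "\<not> ?h (Suc a mod n)" using suc_lt by auto
    then show "a \<in> sw n ?h" unfolding sw_def using an by auto
  qed
  have "4 \<le> card ?D + card (sd ?D (sw n ?fv)) + card (sd ?D (sw n ?fu))"
  proof (rule abs4[OF _ sw_fin sw_fin sw_even[OF n0] sw_even[OF n0] _ _ eh sw_even[OF n0] n3 _ h1 h2 h3])
    show "finite ?D" by simp
    show "sw n ?fu \<noteq> {}" using cu by auto
    show "sw n ?fv \<noteq> {}" using cv by auto
    show "?D \<subseteq> {..<n}" by auto
  qed
  then show ?thesis using col_edge[OF e, of X] eA eB by simp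
qed

end

context SP begin

definition bd :: "'a set \<Rightarrow> 'a set set" where
  "bd T = {e \<in> E. \<exists>u\<in>T. \<exists>v\<in>V - T. e = {u,v}}"

lemma E_other: assumes "e \<in> E" "x \<in> e" shows "\<exists>w. w \<in> V \<and> w \<noteq> x \<and> e = {x,w}"
proof -
  obtain a b where ab: "a \<in> V" "b \<in> V" "a \<noteq> b" "e = {a,b}" using E_two[OF assms(1)] by blast
  show ?thesis
  proof (cases "x = a")
    case True then show ?thesis using ab by blast
  next
    case False
    then have "x = b" using ab assms(2) by auto
    then show ?thesis using ab by (auto simp: insert_commute)
  qed
qed

lemma E_pair: assumes "e \<in> E" "x \<in> e" "y \<in> e" "x \<noteq> y" shows "e = {x,y}"
proof -
  obtain w where w: "w \<in> V" "w \<noteq> x" "e = {x,w}" using E_other[OF assms(1,2)] by blast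
  then have "y = w" using assms(3,4) by auto
  then show ?thesis using w by simp
qed

lemma fin_cards: "finite {card S |S. edge_cut V E S}"
proof -
  have "{card S |S. edge_cut V E S} \<subseteq> card ` Pow E" unfolding edge_cut_def by auto
  moreover have "finite (card ` Pow E)" using finE by simp
  ultimately show ?thesis by (rule finite_subset)
qed

lemma reach_inv:
  assumes r: "(u, w) \<in> (edge_rel F)\<^sup>*" and u: "u \<in> T"
    and stp: "\<And>a b. a \<in> T \<Longrightarrow> {a,b} \<in> F \<Longrightarrow> b \<in> T"
  shows "w \<in> T"
  using r
proof (induction rule: rtrancl_induct)
  case base then show ?case using u .
next
  case (step y z)
  from step.hyps(2) have "{y,z} \<in> F" unfolding edge_rel_def by simp
  then show ?case using stp[OF step.IH] by simp
qed

lemma bd_cut: assumes T: "T \<subseteq> V" "u \<in> T" "v \<in> V" "v \<notin> T"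
  shows "edge_conn V E \<le> card (bd T)"
proof -
  have "\<not> reachable (E - bd T) u v"
  proof
    assume "reachable (E - bd T) u v"
    then have r: "(u,v) \<in> (edge_rel (E - bd T))\<^sup>*" unfolding reachable_def .
    have "v \<in> T"
    proof (rule reach_inv[OF r T(2)])
      fix a b assume ab: "a \<in> T" "{a,b} \<in> E - bd T"
      show "b \<in> T"
      proof (rule ccontr)
        assume "b \<notin> T"
        moreover have "b \<in> V" using E_V ab(2) by auto
        ultimately have "{a,b} \<in> bd T" using ab unfolding bd_def by auto
        then show False using ab(2) by simp
      qed
    qed
    then show False using T(4) by simp
  qed
  then have "\<not> connected V (E - bd T)" unfolding connected_def using T by auto
  then have "edge_cut V E (bd T)" unfolding edge_cut_def bd_def by auto
  then have "card (bd T) \<in> {card S |S. edge_cut V E S}" by auto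
  then show ?thesis unfolding edge_conn_def using fin_cards by (rule Min_le[rotated])
qed

lemma mindeg_le: assumes "x \<in> V" shows "min_degree V E \<le> degree E x"
  unfolding min_degree_def using assms finV by (intro Min_le) auto

definition mixed :: "('a \<times> nat) set \<Rightarrow> 'a \<Rightarrow> bool" where
  "mixed X x \<longleftrightarrow> (\<exists>i<n. \<exists>j<n. ((x,i) \<in> X) \<noteq> ((x,j) \<in> X))"

lemma not_mixed: assumes "\<not> mixed X x" shows "(\<forall>i<n. (x,i) \<in> X) \<or> (\<forall>i<n. (x,i) \<notin> X)"
proof -
  have n0: "0 < n" using n3 by simp
  have all: "\<And>i. i < n \<Longrightarrow> ((x,i) \<in> X) = ((x,0) \<in> X)"
  proof -
    fix i assume "i < n"
    then show "((x,i) \<in> X) = ((x,0) \<in> X)" using assms n0 unfolding mixed_def by blast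
  qed
  show ?thesis
  proof (cases "(x,0) \<in> X")
    case True then show ?thesis using all by blast
  next
    case False then show ?thesis using all by blast
  qed
qed

lemma touch3: assumes e: "e \<in> E" "x \<in> e" and m: "mixed X x"
  shows "3 \<le> card (Ce X e)"
proof -
  obtain w where w: "w \<in> V" "w \<noteq> x" "e = {x,w}" using E_other[OF e] by blast
  obtain i j where ij: "i < n" "j < n" "((x,i) \<in> X) \<noteq> ((x,j) \<in> X)" using m unfolding mixed_def by blast
  show ?thesis
  proof (cases "mixed X w")
    case True
    then obtain i2 j2 where ij2: "i2 < n" "j2 < n" "((w,i2) \<in> X) \<noteq> ((w,j2) \<in> X)" unfolding mixed_def by blast
    have "4 \<le> card (Ce X {x,w})" using col_mixed[of x w i j X i2 j2] e w ij ij2 by simp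
    then show ?thesis using w by simp
  next
    case False
    then obtain c where c: "\<forall>k<n. ((w,k) \<in> X) = c" using not_mixed by blast
    have "3 * card {k. k < n \<and> ((x,k) \<in> X) \<noteq> c} \<le> card (Ce X {x,w})"
      using col_const[of x w X c] e w c by simp
    moreover have "{k. k < n \<and> ((x,k) \<in> X) \<noteq> c} \<noteq> {}" using ij by auto
    then have "1 \<le> card {k. k < n \<and> ((x,k) \<in> X) \<noteq> c}" by (simp add: Suc_leI card_gt_0_iff)
    ultimately show ?thesis using w by simp
  qed
qed

end

context SP begin

lemma VH_mem: "(x,i) \<in> VH \<longleftrightarrow> x \<in> V \<and> i < n"
  unfolding sp_verts_def cycle_verts_def by auto

lemma sum_ge_const:
  assumes "finite F" "\<And>e. e \<in> F \<Longrightarrow> (k::nat) \<le> g e"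
  shows "k * card F \<le> sum g F"
proof -
  have "sum (\<lambda>e. k) F \<le> sum g F" using assms(2) by (rule sum_mono)
  then show ?thesis by (simp add: mult.commute)
qed

lemma coreA:
  assumes XV: "X \<subseteq> VH" and nm: "\<forall>x\<in>V. \<not> mixed X x"
    and p0: "(x,i) \<in> X" and q0: "(y,j) \<in> VH" "(y,j) \<notin> X"
  shows "3 * n * edge_conn V E \<le> card (cut X)"
proof -
  define S1 where "S1 = {x \<in> V. \<forall>i<n. (x,i) \<in> X}"
  have xi: "x \<in> V" "i < n" using p0 XV VH_mem by auto
  have xS: "x \<in> S1" using not_mixed[of X x] nm xi p0 unfolding S1_def by blast
  have yj: "y \<in> V" "j < n" using q0 VH_mem by auto
  have yS: "y \<notin> S1" using yj q0 unfolding S1_def by auto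
  have lam: "edge_conn V E \<le> card (bd S1)" using bd_cut[of S1 x y] xS yS yj unfolding S1_def by auto
  have each: "\<And>e. e \<in> bd S1 \<Longrightarrow> 3 * n \<le> card (Ce X e)"
  proof -
    fix e assume "e \<in> bd S1"
    then obtain u v where uv: "e \<in> E" "u \<in> S1" "v \<in> V" "v \<notin> S1" "e = {u,v}" unfolding bd_def by auto
    have "\<forall>k<n. ((v,k) \<in> X) = False"
      using not_mixed[of X v] nm uv(3,4) n3 unfolding S1_def by auto
    then have "3 * card {k. k < n \<and> ((u,k) \<in> X) \<noteq> False} \<le> card (Ce X {u,v})"
      using col_const[of u v X False] uv by simp
    moreover have "{k. k < n \<and> ((u,k) \<in> X) \<noteq> False} = {..<n}" using uv(2) unfolding S1_def by auto
    ultimately show "3 * n \<le> card (Ce X e)" using uv by simp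
  qed
  have fbd: "finite (bd S1)" using finE unfolding bd_def by auto
  have "3 * n * card (bd S1) \<le> (\<Sum>e\<in>bd S1. card (Ce X e))" by (rule sum_ge_const[OF fbd each])
  also have "\<dots> \<le> card (cut X)" using card_cut_ge[of "{}" "bd S1" X] unfolding bd_def by auto
  finally have "3 * n * card (bd S1) \<le> card (cut X)" .
  moreover have "3 * n * edge_conn V E \<le> 3 * n * card (bd S1)" using lam by simp
  ultimately show ?thesis by linarith
qed

lemma coreB:
  assumes x: "x \<in> V" and y: "y \<in> V" and xy: "x \<noteq> y" and mx: "mixed X x" and my: "mixed X y"
  shows "6 * min_degree V E + 2 \<le> card (cut X)"
proof -
  obtain i1 j1 where ij1: "i1 < n" "j1 < n" "((x,i1) \<in> X) \<noteq> ((x,j1) \<in> X)" using mx unfolding mixed_def by blast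
  obtain i2 j2 where ij2: "i2 < n" "j2 < n" "((y,i2) \<in> X) \<noteq> ((y,j2) \<in> X)" using my unfolding mixed_def by blast
  have cvx: "2 \<le> card (Cv X x)" using col_vert[OF x ij1] .
  have cvy: "2 \<le> card (Cv X y)" using col_vert[OF y ij2] .
  define F1 where "F1 = {e \<in> E. x \<in> e}"
  define F2 where "F2 = {e \<in> E. y \<in> e \<and> x \<notin> e}"
  have fF1: "finite F1" "finite F2" using finE unfolding F1_def F2_def by auto
  have dj: "F1 \<inter> F2 = {}" unfolding F1_def F2_def by auto
  have W: "{x,y} \<subseteq> V" using x y by simp
  have FE: "F1 \<union> F2 \<subseteq> E" unfolding F1_def F2_def by auto
  have main: "card (Cv X x) + card (Cv X y) + ((\<Sum>e\<in>F1. card (Ce X e)) + (\<Sum>e\<in>F2. card (Ce X e))) \<le> card (cut X)"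
  proof -
    have "(\<Sum>z\<in>{x,y}. card (Cv X z)) + (\<Sum>e\<in>F1 \<union> F2. card (Ce X e)) \<le> card (cut X)"
      by (rule card_cut_ge[OF W FE])
    moreover have "(\<Sum>z\<in>{x,y}. card (Cv X z)) = card (Cv X x) + card (Cv X y)" using xy by simp
    moreover have "(\<Sum>e\<in>F1 \<union> F2. card (Ce X e)) = (\<Sum>e\<in>F1. card (Ce X e)) + (\<Sum>e\<in>F2. card (Ce X e))"
      by (rule sum.union_disjoint[OF fF1 dj])
    ultimately show ?thesis by simp
  qed
  have t1: "\<And>e. e \<in> F1 \<Longrightarrow> 3 \<le> card (Ce X e)"
  proof -
    fix e assume "e \<in> F1"
    then have "e \<in> E" "x \<in> e" unfolding F1_def by simp_all
    then show "3 \<le> card (Ce X e)" by (rule touch3[OF _ _ mx])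
  qed
  have t2: "\<And>e. e \<in> F2 \<Longrightarrow> 3 \<le> card (Ce X e)"
  proof -
    fix e assume "e \<in> F2"
    then have "e \<in> E" "y \<in> e" unfolding F2_def by simp_all
    then show "3 \<le> card (Ce X e)" by (rule touch3[OF _ _ my])
  qed
  have s2: "3 * card F2 \<le> (\<Sum>e\<in>F2. card (Ce X e))" by (rule sum_ge_const[OF fF1(2) t2])
  have dx: "min_degree V E \<le> card F1" using mindeg_le[OF x] unfolding degree_def F1_def .
  have dy: "min_degree V E \<le> card {e \<in> E. y \<in> e}" using mindeg_le[OF y] unfolding degree_def .
  show ?thesis
  proof (cases "{x,y} \<in> E")
    case True
    have xyF1: "{x,y} \<in> F1" using True unfolding F1_def by simp
    have r1: "(\<Sum>e\<in>F1. card (Ce X e)) = card (Ce X {x,y}) + (\<Sum>e\<in>F1 - {{x,y}}. card (Ce X e))"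
      using sum.remove[OF fF1(1) xyF1] by simp
    have r2: "4 \<le> card (Ce X {x,y})" using col_mixed[OF True ij1 ij2] .
    have fr: "finite (F1 - {{x,y}})" using fF1(1) by simp
    have r3: "3 * card (F1 - {{x,y}}) \<le> (\<Sum>e\<in>F1 - {{x,y}}. card (Ce X e))"
      by (rule sum_ge_const[OF fr]) (rule t1, simp)
    have r4: "card F1 = Suc (card (F1 - {{x,y}}))" using card.remove[OF fF1(1) xyF1] .
    have eqy: "{e \<in> E. y \<in> e} = insert {x,y} F2"
    proof (rule set_eqI)
      fix e
      show "e \<in> {e \<in> E. y \<in> e} \<longleftrightarrow> e \<in> insert {x,y} F2"
      proof
        assume a: "e \<in> {e \<in> E. y \<in> e}"
        show "e \<in> insert {x,y} F2"
        proof (cases "x \<in> e")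
          case True
          then have "e = {x,y}" using E_pair[of e x y] a xy by simp
          then show ?thesis by simp
        next
          case False then show ?thesis using a unfolding F2_def by simp
        qed
      next
        assume "e \<in> insert {x,y} F2"
        then show "e \<in> {e \<in> E. y \<in> e}" using True unfolding F2_def by auto
      qed
    qed
    have xyF2: "{x,y} \<notin> F2" unfolding F2_def by simp
    have r5: "card {e \<in> E. y \<in> e} = Suc (card F2)"
      unfolding eqy using card_insert_disjoint[OF fF1(2) xyF2] .
    show ?thesis using main cvx cvy s2 dx dy r1 r2 r3 r4 r5 by linarith
  next
    case False
    have s1: "3 * card F1 \<le> (\<Sum>e\<in>F1. card (Ce X e))" by (rule sum_ge_const[OF fF1(1) t1])
    have eqy: "{e \<in> E. y \<in> e} = F2"
    proof (rule set_eqI)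
      fix e
      show "e \<in> {e \<in> E. y \<in> e} \<longleftrightarrow> e \<in> F2"
      proof
        assume a: "e \<in> {e \<in> E. y \<in> e}"
        have "x \<notin> e"
        proof
          assume "x \<in> e"
          then have "e = {x,y}" using E_pair[of e x y] a xy by simp
          then show False using a False by simp
        qed
        then show "e \<in> F2" using a unfolding F2_def by simp
      next
        assume "e \<in> F2" then show "e \<in> {e \<in> E. y \<in> e}" unfolding F2_def by simp
      qed
    qed
    have dy2: "min_degree V E \<le> card F2" using dy eqy by simp
    show ?thesis using main cvx cvy s2 s1 dx dy2 by linarith
  qed
qed

end

context SP begin

lemma nb_col:
  assumes nb: "\<forall>p\<in>VH. \<exists>q. hadj p q \<and> ((q \<in> X) = (p \<in> X))"
    and x: "x \<in> V" and i0: "i0 < n"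
    and uniq: "\<forall>j<n. j \<noteq> i0 \<longrightarrow> ((x,j) \<in> X) \<noteq> ((x,i0) \<in> X)"
  shows "\<exists>w j. w \<in> V \<and> w \<noteq> x \<and> j < n \<and> {x,w} \<in> E \<and> (((w,j) \<in> X) = ((x,i0) \<in> X))"
proof -
  have "(x,i0) \<in> VH" using x i0 VH_mem by simp
  then obtain q where q: "hadj (x,i0) q" "(q \<in> X) = ((x,i0) \<in> X)" using nb by blast
  obtain w j where wj: "q = (w,j)" by fastforce
  have h: "hadj (x,i0) (w,j)" using q(1) wj by simp
  have wV: "w \<in> V" "j < n" using h unfolding hadj_def by auto
  have wx: "w \<noteq> x"
  proof
    assume "w = x"
    then have "j \<noteq> i0" using hadj_neq[OF h] by auto
    then show False using uniq wV(2) q(2) wj \<open>w = x\<close> by auto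
  qed
  have "{x,w} \<in> E" using h wx unfolding hadj_def by auto
  then show ?thesis using wV wx q(2) wj by blast
qed

lemma coreC:
  assumes XV: "X \<subseteq> VH" and x: "x \<in> V" and mx: "mixed X x"
    and oth: "\<forall>y\<in>V. y \<noteq> x \<longrightarrow> \<not> mixed X y"
    and nb: "\<forall>p\<in>VH. \<exists>q. hadj p q \<and> ((q \<in> X) = (p \<in> X))"
  shows "min (3 * n * edge_conn V E) (6 * min_degree V E + 2) \<le> card (cut X)"
proof -
  define S1 where "S1 = {w \<in> V. \<forall>i<n. (w,i) \<in> X}"
  define S0 where "S0 = {w \<in> V. \<forall>i<n. (w,i) \<notin> X}"
  define Ea where "Ea = {e \<in> E. \<exists>w\<in>S1. e = {x,w}}"
  define Eb where "Eb = {e \<in> E. \<exists>w\<in>S0. e = {x,w}}"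
  define Fs where "Fs = {e \<in> E. \<exists>u\<in>S1. \<exists>v\<in>S0. e = {u,v}}"
  define I1 where "I1 = {i. i < n \<and> (x,i) \<in> X}"
  define I0 where "I0 = {i. i < n \<and> (x,i) \<notin> X}"
  define oo where "oo = card I1"
  define zz where "zz = card I0"
  define a where "a = card Ea"
  define b where "b = card Eb"
  define f where "f = card Fs"
  define lam where "lam = edge_conn V E"
  define dl where "dl = min_degree V E"
  have n0: "0 < n" using n3 by simp
  obtain i1 j1 where ij1: "i1 < n" "j1 < n" "((x,i1) \<in> X) \<noteq> ((x,j1) \<in> X)" using mx unfolding mixed_def by blast
  have xS: "x \<notin> S1" "x \<notin> S0" using ij1 unfolding S1_def S0_def by auto
  have S10: "\<And>w. w \<in> S1 \<Longrightarrow> w \<notin> S0" using n0 unfolding S1_def S0_def by auto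
  have part: "\<And>w. w \<in> V \<Longrightarrow> w \<noteq> x \<Longrightarrow> w \<in> S1 \<or> w \<in> S0"
    using not_mixed oth unfolding S1_def S0_def by blast
  have S1V: "S1 \<subseteq> V" unfolding S1_def by auto
  have S0V: "S0 \<subseteq> V" unfolding S0_def by auto
  have fI: "finite I1" "finite I0" unfolding I1_def I0_def by auto
  have "I1 \<union> I0 = {..<n}" unfolding I1_def I0_def by auto
  moreover have "I1 \<inter> I0 = {}" unfolding I1_def I0_def by auto
  ultimately have oz: "oo + zz = n" unfolding oo_def zz_def using card_Un_disjoint[OF fI] by simp
  have "I1 \<noteq> {}" "I0 \<noteq> {}" using ij1 unfolding I1_def I0_def by auto
  then have o1: "1 \<le> oo" and z1: "1 \<le> zz" unfolding oo_def zz_def using fI by (simp_all add: Suc_leI card_gt_0_iff)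
  have fE: "finite Ea" "finite Eb" "finite Fs" using finE unfolding Ea_def Eb_def Fs_def by auto
  have dab: "Ea \<inter> Eb = {}"
  proof (rule ccontr)
    assume "\<not> ?thesis"
    then obtain e w w' where "w \<in> S1" "w' \<in> S0" "e = {x,w}" "e = {x,w'}" unfolding Ea_def Eb_def by blast
    moreover have "w \<noteq> x" using \<open>w \<in> S1\<close> xS by auto
    ultimately have "w = w'" by (auto simp: doubleton_eq_iff)
    then show False using \<open>w \<in> S1\<close> \<open>w' \<in> S0\<close> S10 by simp
  qed
  have dfa: "Fs \<inter> (Ea \<union> Eb) = {}"
  proof (rule ccontr)
    assume "\<not> ?thesis"
    then obtain e u v w where uv: "u \<in> S1" "v \<in> S0" "e = {u,v}" "e = {x,w}" unfolding Fs_def Ea_def Eb_def by blast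
    have "x \<in> e" using uv(4) by simp
    then have "x \<in> {u,v}" using uv(3) by simp
    then show False using uv xS by auto
  qed
  have degx: "{e \<in> E. x \<in> e} = Ea \<union> Eb"
  proof (rule set_eqI)
    fix e
    show "e \<in> {e \<in> E. x \<in> e} \<longleftrightarrow> e \<in> Ea \<union> Eb"
    proof
      assume "e \<in> {e \<in> E. x \<in> e}"
      then have e: "e \<in> E" "x \<in> e" by simp_all
      obtain w where w: "w \<in> V" "w \<noteq> x" "e = {x,w}" using E_other[OF e] by blast
      show "e \<in> Ea \<union> Eb" using part[OF w(1,2)] e w unfolding Ea_def Eb_def by blast
    next
      assume "e \<in> Ea \<union> Eb"
      then show "e \<in> {e \<in> E. x \<in> e}" unfolding Ea_def Eb_def by auto
    qed
  qed
  have dlab: "dl \<le> a + b"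
  proof -
    have "dl \<le> card {e \<in> E. x \<in> e}" using mindeg_le[OF x] unfolding dl_def degree_def .
    also have "\<dots> = a + b" unfolding degx a_def b_def using card_Un_disjoint[OF fE(1,2) dab] .
    finally show ?thesis .
  qed
  have bd1: "bd S1 = Fs \<union> Ea"
  proof (rule set_eqI)
    fix e
    show "e \<in> bd S1 \<longleftrightarrow> e \<in> Fs \<union> Ea"
    proof
      assume "e \<in> bd S1"
      then obtain u v where uv: "e \<in> E" "u \<in> S1" "v \<in> V" "v \<notin> S1" "e = {u,v}" unfolding bd_def by blast
      show "e \<in> Fs \<union> Ea"
      proof (cases "v = x")
        case True
        then have "e = {x,u}" using uv by (simp add: insert_commute)
        then show ?thesis using uv unfolding Ea_def by blast
      next
        case False
        then have "v \<in> S0" using part[OF uv(3)] uv(4) by blast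
        then show ?thesis using uv unfolding Fs_def by blast
      qed
    next
      assume "e \<in> Fs \<union> Ea"
      then show "e \<in> bd S1"
      proof
        assume "e \<in> Fs"
        then obtain u v where uv: "e \<in> E" "u \<in> S1" "v \<in> S0" "e = {u,v}" unfolding Fs_def by blast
        then have "v \<in> V - S1" using S10 S0V by blast
        then show ?thesis using uv unfolding bd_def by blast
      next
        assume "e \<in> Ea"
        then obtain w where w: "e \<in> E" "w \<in> S1" "e = {x,w}" unfolding Ea_def by blast
        then have "e = {w,x}" by (simp add: insert_commute)
        then show ?thesis using w x xS unfolding bd_def by blast
      qed
    qed
  qed
  have bd2: "bd (insert x S1) = Fs \<union> Eb"
  proof (rule set_eqI)
    fix e
    show "e \<in> bd (insert x S1) \<longleftrightarrow> e \<in> Fs \<union> Eb"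
    proof
      assume "e \<in> bd (insert x S1)"
      then obtain u v where uv: "e \<in> E" "u \<in> insert x S1" "v \<in> V" "v \<notin> insert x S1" "e = {u,v}"
        unfolding bd_def by blast
      have vS0: "v \<in> S0" using part[OF uv(3)] uv(4) by blast
      show "e \<in> Fs \<union> Eb"
      proof (cases "u = x")
        case True then show ?thesis using uv vS0 unfolding Eb_def by blast
      next
        case False then have "u \<in> S1" using uv(2) by simp
        then show ?thesis using uv vS0 unfolding Fs_def by blast
      qed
    next
      assume "e \<in> Fs \<union> Eb"
      then show "e \<in> bd (insert x S1)"
      proof
        assume "e \<in> Fs"
        then obtain u v where uv: "e \<in> E" "u \<in> S1" "v \<in> S0" "e = {u,v}" unfolding Fs_def by blast
        then have "v \<in> V - insert x S1" using S10 S0V xS by blast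
        then show ?thesis using uv unfolding bd_def by blast
      next
        assume "e \<in> Eb"
        then obtain w where w: "e \<in> E" "w \<in> S0" "e = {x,w}" unfolding Eb_def by blast
        then have "w \<in> V - insert x S1" using S10 S0V xS by blast
        then show ?thesis using w unfolding bd_def by blast
      qed
    qed
  qed
  have cbd1: "card (bd S1) = f + a" unfolding bd1 f_def a_def
    by (rule card_Un_disjoint[OF fE(3) fE(1)]) (use dfa in blast)
  have cbd2: "card (bd (insert x S1)) = f + b" unfolding bd2 f_def b_def
    by (rule card_Un_disjoint[OF fE(3) fE(2)]) (use dfa in blast)
  have ea: "\<And>e. e \<in> Ea \<Longrightarrow> 3 * zz \<le> card (Ce X e)"
  proof -
    fix e assume "e \<in> Ea"
    then obtain w where w: "e \<in> E" "w \<in> S1" "e = {x,w}" unfolding Ea_def by blast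
    have c: "\<forall>k<n. ((w,k) \<in> X) = True" using w(2) unfolding S1_def by simp
    have "3 * card {k. k < n \<and> ((x,k) \<in> X) \<noteq> True} \<le> card (Ce X {x,w})"
      using col_const[of x w X True] w c by simp
    moreover have "{k. k < n \<and> ((x,k) \<in> X) \<noteq> True} = I0" unfolding I0_def by simp
    ultimately show "3 * zz \<le> card (Ce X e)" using w unfolding zz_def by simp
  qed
  have eb: "\<And>e. e \<in> Eb \<Longrightarrow> 3 * oo \<le> card (Ce X e)"
  proof -
    fix e assume "e \<in> Eb"
    then obtain w where w: "e \<in> E" "w \<in> S0" "e = {x,w}" unfolding Eb_def by blast
    have c: "\<forall>k<n. ((w,k) \<in> X) = False" using w(2) unfolding S0_def by simp
    have "3 * card {k. k < n \<and> ((x,k) \<in> X) \<noteq> False} \<le> card (Ce X {x,w})"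
      using col_const[of x w X False] w c by simp
    moreover have "{k. k < n \<and> ((x,k) \<in> X) \<noteq> False} = I1" unfolding I1_def by simp
    ultimately show "3 * oo \<le> card (Ce X e)" using w unfolding oo_def by simp
  qed
  have fs: "\<And>e. e \<in> Fs \<Longrightarrow> 3 * n \<le> card (Ce X e)"
  proof -
    fix e assume "e \<in> Fs"
    then obtain u v where uv: "e \<in> E" "u \<in> S1" "v \<in> S0" "e = {u,v}" unfolding Fs_def by blast
    have c: "\<forall>k<n. ((v,k) \<in> X) = False" using uv(3) unfolding S0_def by simp
    have "3 * card {k. k < n \<and> ((u,k) \<in> X) \<noteq> False} \<le> card (Ce X {u,v})"
      using col_const[of u v X False] uv c by simp
    moreover have "{k. k < n \<and> ((u,k) \<in> X) \<noteq> False} = {..<n}" using uv(2) unfolding S1_def by auto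
    ultimately show "3 * n \<le> card (Ce X e)" using uv by simp
  qed
  have cv: "2 \<le> card (Cv X x)" using col_vert[OF x ij1] .
  have main: "2 + 3 * (n * f) + 3 * (zz * a) + 3 * (oo * b) \<le> card (cut X)"
  proof -
    have W: "{x} \<subseteq> V" using x by simp
    have FE: "Fs \<union> Ea \<union> Eb \<subseteq> E" unfolding Fs_def Ea_def Eb_def by auto
    have g: "(\<Sum>z\<in>{x}. card (Cv X z)) + (\<Sum>e\<in>Fs \<union> Ea \<union> Eb. card (Ce X e)) \<le> card (cut X)"
      by (rule card_cut_ge[OF W FE])
    have d1: "(Fs \<union> Ea) \<inter> Eb = {}" using dab dfa by blast
    have d2: "Fs \<inter> Ea = {}" using dfa by blast
    have "(\<Sum>e\<in>Fs \<union> Ea \<union> Eb. card (Ce X e)) = (\<Sum>e\<in>Fs \<union> Ea. card (Ce X e)) + (\<Sum>e\<in>Eb. card (Ce X e))"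
      by (rule sum.union_disjoint) (use fE d1 in auto)
    also have "(\<Sum>e\<in>Fs \<union> Ea. card (Ce X e)) = (\<Sum>e\<in>Fs. card (Ce X e)) + (\<Sum>e\<in>Ea. card (Ce X e))"
      by (rule sum.union_disjoint) (use fE d2 in auto)
    finally have sp: "(\<Sum>e\<in>Fs \<union> Ea \<union> Eb. card (Ce X e)) = (\<Sum>e\<in>Fs. card (Ce X e)) + (\<Sum>e\<in>Ea. card (Ce X e)) + (\<Sum>e\<in>Eb. card (Ce X e))" .
    have s1: "(3 * n) * f \<le> (\<Sum>e\<in>Fs. card (Ce X e))" unfolding f_def by (rule sum_ge_const[OF fE(3) fs])
    have s2: "(3 * zz) * a \<le> (\<Sum>e\<in>Ea. card (Ce X e))" unfolding a_def by (rule sum_ge_const[OF fE(1) ea])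
    have s3: "(3 * oo) * b \<le> (\<Sum>e\<in>Eb. card (Ce X e))" unfolding b_def by (rule sum_ge_const[OF fE(2) eb])
    have "(\<Sum>z\<in>{x}. card (Cv X z)) = card (Cv X x)" by simp
    then show ?thesis using g sp s1 s2 s3 cv by (simp add: mult.assoc)
  qed
  have gl: "3 * n * lam \<le> card (cut X) \<Longrightarrow> ?thesis" unfolding lam_def by (rule min.coboundedI1)
  have gd: "6 * dl + 2 \<le> card (cut X) \<Longrightarrow> ?thesis" unfolding dl_def by (rule min.coboundedI2)
  consider (big) "2 \<le> oo" "2 \<le> zz" | (c1) "oo = 1" | (c2) "zz = 1" using o1 z1 by linarith
  then show ?thesis
  proof cases
    case big
    have "2 * a \<le> zz * a" using big(2) by (rule mult_le_mono1)
    moreover have "2 * b \<le> oo * b" using big(1) by (rule mult_le_mono1)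
    ultimately show ?thesis using main dlab by (intro gd) linarith
  next
    case c1
    have zn: "zz + 1 = n" using oz c1 by simp
    obtain i0 where i0: "I1 = {i0}" using c1 unfolding oo_def by (rule card_1_singletonE)
    have i0n: "i0 < n" "(x,i0) \<in> X" using i0 unfolding I1_def by auto
    have uq: "\<forall>j<n. j \<noteq> i0 \<longrightarrow> ((x,j) \<in> X) \<noteq> ((x,i0) \<in> X)"
    proof (intro allI impI)
      fix j assume j: "j < n" "j \<noteq> i0"
      have "j \<notin> I1" using i0 j(2) by simp
      then show "((x,j) \<in> X) \<noteq> ((x,i0) \<in> X)" using j(1) i0n(2) unfolding I1_def by simp
    qed
    obtain w j where w: "w \<in> V" "w \<noteq> x" "j < n" "{x,w} \<in> E" "((w,j) \<in> X) = ((x,i0) \<in> X)"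
      using nb_col[OF nb x i0n(1) uq] by blast
    have wS1: "w \<in> S1" using part[OF w(1,2)] w(3,5) i0n(2) unfolding S0_def by auto
    have "{x,w} \<in> Ea" using w(4) wS1 unfolding Ea_def by blast
    then have "Ea \<noteq> {}" by blast
    then have a1: "1 \<le> a" unfolding a_def using fE(1) by (simp add: Suc_leI card_gt_0_iff)
    have ob: "oo * b = b" using c1 by simp
    show ?thesis
    proof (cases "S0 = {}")
      case True
      then have "Eb = {}" unfolding Eb_def by simp
      then have "b = 0" unfolding b_def by simp
      moreover have "2 * a \<le> zz * a" using zn n3 by (intro mult_le_mono1) linarith
      ultimately show ?thesis using main dlab by (intro gd) linarith
    next
      case S0ne: False
      show ?thesis
      proof (cases "a \<le> b")
        case True
        have "lam \<le> f + a" unfolding lam_def using bd_cut[OF S1V wS1 x xS(1)] cbd1 by simp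
        then have "n * lam \<le> n * f + n * a" by (metis add_mult_distrib2 mult_le_mono2)
        moreover have "zz * a + a = n * a" using zn by (metis add_mult_distrib mult_1)
        ultimately show ?thesis using main ob True by (intro gl) linarith
      next
        case False
        obtain v where v: "v \<in> S0" using S0ne by blast
        have "insert x S1 \<subseteq> V" using S1V x by simp
        moreover have "v \<notin> insert x S1" using v S10 xS by auto
        ultimately have "lam \<le> f + b" unfolding lam_def using bd_cut[of "insert x S1" x v] v S0V cbd2 by auto
        then have "n * lam \<le> n * f + n * b" by (metis add_mult_distrib2 mult_le_mono2)
        moreover have "zz * b + b = n * b" using zn by (metis add_mult_distrib mult_1)
        moreover have "zz * b \<le> zz * a" using False by simp
        ultimately show ?thesis using main ob by (intro gl) linarith
      qed
    qed
  next
    case c2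
    have on: "oo + 1 = n" using oz c2 by simp
    obtain i0 where i0: "I0 = {i0}" using c2 unfolding zz_def by (rule card_1_singletonE)
    have i0n: "i0 < n" "(x,i0) \<notin> X" using i0 unfolding I0_def by auto
    have uq: "\<forall>j<n. j \<noteq> i0 \<longrightarrow> ((x,j) \<in> X) \<noteq> ((x,i0) \<in> X)"
    proof (intro allI impI)
      fix j assume j: "j < n" "j \<noteq> i0"
      have "j \<notin> I0" using i0 j(2) by simp
      then show "((x,j) \<in> X) \<noteq> ((x,i0) \<in> X)" using j(1) i0n(2) unfolding I0_def by simp
    qed
    obtain w j where w: "w \<in> V" "w \<noteq> x" "j < n" "{x,w} \<in> E" "((w,j) \<in> X) = ((x,i0) \<in> X)"
      using nb_col[OF nb x i0n(1) uq] by blast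
    have wS0: "w \<in> S0" using part[OF w(1,2)] w(3,5) i0n(2) unfolding S1_def by auto
    have "{x,w} \<in> Eb" using w(4) wS0 unfolding Eb_def by blast
    then have "Eb \<noteq> {}" by blast
    then have b1: "1 \<le> b" unfolding b_def using fE(2) by (simp add: Suc_leI card_gt_0_iff)
    have za: "zz * a = a" using c2 by simp
    show ?thesis
    proof (cases "S1 = {}")
      case True
      then have "Ea = {}" unfolding Ea_def by simp
      then have "a = 0" unfolding a_def by simp
      moreover have "2 * b \<le> oo * b" using on n3 by (intro mult_le_mono1) linarith
      ultimately show ?thesis using main dlab by (intro gd) linarith
    next
      case S1ne: False
      show ?thesis
      proof (cases "b \<le> a")
        case True
        have "insert x S1 \<subseteq> V" using S1V x by simp
        moreover have "w \<notin> insert x S1" using wS0 S10 xS w(2) by auto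
        ultimately have "lam \<le> f + b" unfolding lam_def using bd_cut[of "insert x S1" x w] w(1) cbd2 by auto
        then have "n * lam \<le> n * f + n * b" by (metis add_mult_distrib2 mult_le_mono2)
        moreover have "oo * b + b = n * b" using on by (metis add_mult_distrib mult_1)
        ultimately show ?thesis using main za True by (intro gl) linarith
      next
        case False
        obtain v where v: "v \<in> S1" using S1ne by blast
        have "lam \<le> f + a" unfolding lam_def using bd_cut[OF S1V v x xS(1)] cbd1 by simp
        then have "n * lam \<le> n * f + n * a" by (metis add_mult_distrib2 mult_le_mono2)
        moreover have "oo * a + a = n * a" using on by (metis add_mult_distrib mult_1)
        moreover have "oo * a \<le> oo * b" using False by simp
        ultimately show ?thesis using main za by (intro gl) linarith
      qed
    qed
  qed
qed

end

context SP begin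

lemma edge_rel_sym: "(a,b) \<in> edge_rel F \<longleftrightarrow> (b,a) \<in> edge_rel F"
  unfolding edge_rel_def by (simp add: insert_commute)

lemma lower:
  assumes rec: "restricted_edge_cut VH EH S" and Vne: "V \<noteq> {}"
  shows "min (3 * n * edge_conn V E) (6 * min_degree V E + 2) \<le> card S"
proof -
  have SE: "S \<subseteq> EH" and nc: "\<not> connected VH (EH - S)"
    and R: "\<forall>u\<in>VH. \<exists>v\<in>VH. v \<noteq> u \<and> reachable (EH - S) u v"
    using rec unfolding restricted_edge_cut_def by auto
  have "VH \<noteq> {}" using Vne n3 unfolding sp_verts_def cycle_verts_def by auto
  then obtain u0 v0 where uv0: "u0 \<in> VH" "v0 \<in> VH" "\<not> reachable (EH - S) u0 v0"
    using nc unfolding connected_def by blast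
  define X where "X = {q \<in> VH. reachable (EH - S) u0 q}"
  have XV: "X \<subseteq> VH" unfolding X_def by auto
  have u0X: "u0 \<in> X" unfolding X_def reachable_def using uv0 by auto
  have v0X: "v0 \<notin> X" unfolding X_def using uv0 by auto
  have ext: "\<And>p q. reachable (EH - S) u0 p \<Longrightarrow> {p,q} \<in> EH - S \<Longrightarrow> reachable (EH - S) u0 q"
  proof -
    fix p q assume a1: "reachable (EH - S) u0 p" and a2: "{p,q} \<in> EH - S"
    have r1: "(u0,p) \<in> (edge_rel (EH - S))\<^sup>*" using a1 unfolding reachable_def .
    have r2: "(p,q) \<in> edge_rel (EH - S)" unfolding edge_rel_def using a2 by simp
    show "reachable (EH - S) u0 q" unfolding reachable_def using rtrancl_into_rtrancl[OF r1 r2] .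
  qed
  have sub: "cut X \<subseteq> S"
  proof
    fix c assume c: "c \<in> cut X"
    then obtain p q where pq: "c \<in> EH" "p \<in> X" "q \<in> VH" "q \<notin> X" "c = {p,q}" unfolding cut_def by blast
    show "c \<in> S"
    proof (rule ccontr)
      assume "c \<notin> S"
      then have "{p,q} \<in> EH - S" using pq by simp
      moreover have "reachable (EH - S) u0 p" using pq(2) unfolding X_def by simp
      ultimately have "reachable (EH - S) u0 q" by (rule ext[rotated])
      then show False using pq(3,4) unfolding X_def by simp
    qed
  qed
  have finS: "finite S" using SE finEH finite_subset by auto
  have cS: "card (cut X) \<le> card S" using card_mono[OF finS sub] .
  have nb: "\<forall>p\<in>VH. \<exists>q. hadj p q \<and> ((q \<in> X) = (p \<in> X))"
  proof
    fix p assume p: "p \<in> VH"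
    then obtain v where v: "v \<in> VH" "v \<noteq> p" "reachable (EH - S) p v" using R by blast
    then have "(p,v) \<in> (edge_rel (EH - S))\<^sup>*" unfolding reachable_def by simp
    then obtain w where w: "(p,w) \<in> edge_rel (EH - S)" using v(2)
      by (metis converse_rtranclE)
    then have pw: "{p,w} \<in> EH - S" unfolding edge_rel_def by simp
    then have h: "hadj p w" using EH_iff by simp
    have wV: "w \<in> VH" using hadj_VH[OF h] by simp
    have "(w \<in> X) = (p \<in> X)"
    proof
      assume "w \<in> X"
      then have "reachable (EH - S) u0 w" unfolding X_def by simp
      moreover have "{w,p} \<in> EH - S" using pw by (simp add: insert_commute)
      ultimately have "reachable (EH - S) u0 p" by (rule ext)
      then show "p \<in> X" using p unfolding X_def by simp
    next
      assume "p \<in> X"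
      then have "reachable (EH - S) u0 p" unfolding X_def by simp
      then have "reachable (EH - S) u0 w" using pw by (rule ext)
      then show "w \<in> X" using wV unfolding X_def by simp
    qed
    then show "\<exists>q. hadj p q \<and> ((q \<in> X) = (p \<in> X))" using h by blast
  qed
  have "min (3 * n * edge_conn V E) (6 * min_degree V E + 2) \<le> card (cut X)"
  proof (cases "\<forall>x\<in>V. \<not> mixed X x")
    case True
    obtain x i where xi: "u0 = (x,i)" by fastforce
    obtain y j where yj: "v0 = (y,j)" by fastforce
    have "3 * n * edge_conn V E \<le> card (cut X)"
      using coreA[OF XV True, of x i y j] u0X v0X uv0 xi yj by simp
    then show ?thesis by (rule min.coboundedI1)
  next
    case False
    then obtain x where x: "x \<in> V" "mixed X x" by blast
    show ?thesis
    proof (cases "\<exists>y\<in>V. y \<noteq> x \<and> mixed X y")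
      case True
      then obtain y where y: "y \<in> V" "y \<noteq> x" "mixed X y" by blast
      have "6 * min_degree V E + 2 \<le> card (cut X)" using coreB[OF x(1) y(1) y(2)[symmetric] x(2) y(3)] .
      then show ?thesis by (rule min.coboundedI2)
    next
      case False
      then have oth: "\<forall>y\<in>V. y \<noteq> x \<longrightarrow> \<not> mixed X y" by blast
      show ?thesis using coreC[OF XV x(1) x(2) oth nb] by simp
    qed
  qed
  then show ?thesis using cS by linarith
qed

lemma same_side_rec:
  assumes XV: "X \<subseteq> VH" and a: "a \<in> X" and b: "b \<in> VH" "b \<notin> X"
    and nb: "\<forall>p\<in>VH. \<exists>q. hadj p q \<and> ((q \<in> X) = (p \<in> X))"
  shows "restricted_edge_cut VH EH (cut X)"
proof -
  have s: "cut X \<subseteq> EH" unfolding cut_def by auto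
  have aV: "a \<in> VH" using a XV by auto
  have "\<not> reachable (EH - cut X) a b"
  proof
    assume "reachable (EH - cut X) a b"
    then have r: "(a,b) \<in> (edge_rel (EH - cut X))\<^sup>*" unfolding reachable_def .
    have "b \<in> X"
    proof (rule reach_inv[OF r a])
      fix a' b' assume ab: "a' \<in> X" "{a',b'} \<in> EH - cut X"
      show "b' \<in> X"
      proof (rule ccontr)
        assume "b' \<notin> X"
        moreover have "hadj a' b'" using ab(2) EH_iff by simp
        ultimately have "{a',b'} \<in> cut X" using ab(1) cross by simp
        then show False using ab(2) by simp
      qed
    qed
    then show False using b by simp
  qed
  then have nc: "\<not> connected VH (EH - cut X)" unfolding connected_def using aV b by auto
  have R: "\<forall>u\<in>VH. \<exists>v\<in>VH. v \<noteq> u \<and> reachable (EH - cut X) u v"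
  proof
    fix u assume u: "u \<in> VH"
    then obtain q where q: "hadj u q" "(q \<in> X) = (u \<in> X)" using nb by blast
    have qV: "q \<in> VH" and qu: "q \<noteq> u" using hadj_VH[OF q(1)] hadj_neq[OF q(1)] by auto
    have "{u,q} \<notin> cut X"
    proof
      assume "{u,q} \<in> cut X"
      then obtain p' q' where pq: "p' \<in> X" "q' \<notin> X" "{u,q} = {p',q'}" unfolding cut_def by blast
      then have "(u = p' \<and> q = q') \<or> (u = q' \<and> q = p')" by (simp add: doubleton_eq_iff)
      then show False using pq(1,2) q(2) by auto
    qed
    moreover have "{u,q} \<in> EH" using q(1) EH_iff by simp
    ultimately have "(u,q) \<in> edge_rel (EH - cut X)" unfolding edge_rel_def by simp
    then have "reachable (EH - cut X) u q" unfolding reachable_def by simp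
    then show "\<exists>v\<in>VH. v \<noteq> u \<and> reachable (EH - cut X) u v" using qV qu by blast
  qed
  show ?thesis unfolding restricted_edge_cut_def using s nc R by simp
qed

end

lemma card3: "card {a, b, c::'b} \<le> 3"
  by (simp add: card_insert_if)

context SP begin

lemma upper1:
  assumes uv: "u1 \<in> V" "v1 \<in> V" "u1 \<noteq> v1"
  shows "\<exists>S. restricted_edge_cut VH EH S \<and> card S \<le> 3 * n * edge_conn V E"
proof -
  have "\<not> reachable {} u1 v1" unfolding reachable_def edge_rel_def using uv(3) by simp
  then have "\<not> connected V (E - E)" unfolding connected_def using uv by auto
  then have "edge_cut V E E" unfolding edge_cut_def by simp
  then have ne: "{card S |S. edge_cut V E S} \<noteq> {}" by auto
  have "edge_conn V E \<in> {card S |S. edge_cut V E S}" unfolding edge_conn_def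
    by (rule Min_in[OF fin_cards ne])
  then obtain Sg where Sg: "edge_cut V E Sg" "card Sg = edge_conn V E" by auto
  have SgE: "Sg \<subseteq> E" and ncg: "\<not> connected V (E - Sg)" using Sg(1) unfolding edge_cut_def by auto
  obtain u v where uvr: "u \<in> V" "v \<in> V" "\<not> reachable (E - Sg) u v"
    using ncg uv unfolding connected_def by blast
  define A where "A = {w \<in> V. reachable (E - Sg) u w}"
  have uA: "u \<in> A" unfolding A_def reachable_def using uvr by simp
  have vA: "v \<notin> A" unfolding A_def using uvr by simp
  have AV: "A \<subseteq> V" unfolding A_def by auto
  have bdA: "bd A \<subseteq> Sg"
  proof
    fix e assume "e \<in> bd A"
    then obtain a b where ab: "e \<in> E" "a \<in> A" "b \<in> V" "b \<notin> A" "e = {a,b}" unfolding bd_def by blast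
    show "e \<in> Sg"
    proof (rule ccontr)
      assume "e \<notin> Sg"
      then have r2: "(a,b) \<in> edge_rel (E - Sg)" unfolding edge_rel_def using ab by simp
      have r1: "(u,a) \<in> (edge_rel (E - Sg))\<^sup>*" using ab(2) unfolding A_def reachable_def by simp
      have "reachable (E - Sg) u b" unfolding reachable_def using rtrancl_into_rtrancl[OF r1 r2] .
      then show False using ab(3,4) unfolding A_def by simp
    qed
  qed
  have cbd: "card (bd A) \<le> edge_conn V E"
    using card_mono[OF finite_subset[OF SgE finE] bdA] Sg(2) by simp
  define X where "X = {p \<in> VH. fst p \<in> A}"
  have XV: "X \<subseteq> VH" unfolding X_def by auto
  have n0: "0 < n" using n3 by simp
  have a: "(u,0) \<in> X" unfolding X_def using uA uvr(1) n0 VH_mem by simp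
  have b: "(v,0) \<in> VH" "(v,0) \<notin> X" unfolding X_def using vA uvr(2) n0 VH_mem by auto
  have nb: "\<forall>p\<in>VH. \<exists>q. hadj p q \<and> ((q \<in> X) = (p \<in> X))"
  proof
    fix p assume p: "p \<in> VH"
    obtain w i where wi: "p = (w,i)" by fastforce
    have wV: "w \<in> V" "i < n" using p wi VH_mem by auto
    have h: "hadj (w,i) (w, Suc i mod n)" unfolding hadj_def using wV suc_lt cadj_suc by simp
    have "((w, Suc i mod n) \<in> X) = ((w,i) \<in> X)" unfolding X_def using wV suc_lt VH_mem by simp
    then show "\<exists>q. hadj p q \<and> ((q \<in> X) = (p \<in> X))" using h wi by blast
  qed
  have rec: "restricted_edge_cut VH EH (cut X)" by (rule same_side_rec[OF XV a b nb])
  define P where "P = {(a1,b1). a1 \<in> A \<and> b1 \<in> V - A \<and> {a1,b1} \<in> E}"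
  have finP: "finite P"
  proof -
    have "P \<subseteq> V \<times> V" unfolding P_def using AV by auto
    then show ?thesis using finV finite_subset by blast
  qed
  have cP: "card P \<le> card (bd A)"
  proof -
    have inj: "inj_on (\<lambda>(a1,b1). {a1,b1}) P"
    proof (rule inj_onI)
      fix x y assume xy: "x \<in> P" "y \<in> P" "(\<lambda>(a1,b1). {a1,b1}) x = (\<lambda>(a1,b1). {a1,b1}) y"
      obtain a1 b1 where x: "x = (a1,b1)" by fastforce
      obtain a2 b2 where y: "y = (a2,b2)" by fastforce
      have m: "a1 \<in> A" "b1 \<notin> A" "a2 \<in> A" "b2 \<notin> A" using xy(1,2) x y unfolding P_def by auto
      have "{a1,b1} = {a2,b2}" using xy(3) x y by simp
      then have "(a1 = a2 \<and> b1 = b2) \<or> (a1 = b2 \<and> b1 = a2)" by (simp add: doubleton_eq_iff)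
      then show "x = y" using m x y by auto
    qed
    have "(\<lambda>(a1,b1). {a1,b1}) ` P \<subseteq> bd A" unfolding P_def bd_def by auto
    then have "card ((\<lambda>(a1,b1). {a1,b1}) ` P) \<le> card (bd A)"
      by (rule card_mono[rotated]) (use finE in \<open>auto simp: bd_def\<close>)
    then show ?thesis using card_image[OF inj] by simp
  qed
  define G where "G = (\<lambda>((a1::'a,b1::'a),(i::nat,k::nat)). if k = 0 then {(a1,i),(b1,i)}
      else if k = 1 then {(a1,i),(b1,Suc i mod n)} else {(a1,Suc i mod n),(b1,i)})"
  have csub: "cut X \<subseteq> G ` (P \<times> ({..<n} \<times> {..<3}))"
  proof
    fix c assume "c \<in> cut X"
    then obtain p q where pq: "c \<in> EH" "p \<in> X" "q \<in> VH" "q \<notin> X" "c = {p,q}" unfolding cut_def by blast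
    obtain a1 i where p: "p = (a1,i)" by fastforce
    obtain b1 j where q: "q = (b1,j)" by fastforce
    have h: "hadj (a1,i) (b1,j)" using pq(1,5) p q EH_iff by simp
    have a1A: "a1 \<in> A" "i < n" using pq(2) p unfolding X_def by (auto simp: VH_mem)
    have b1A: "b1 \<in> V" "j < n" "b1 \<notin> A" using pq(3,4) q unfolding X_def by (auto simp: VH_mem)
    have ne: "a1 \<noteq> b1" using a1A b1A by auto
    have e: "{a1,b1} \<in> E" and ij: "i = j \<or> cadj i j" using h ne unfolding hadj_def by auto
    have PP: "(a1,b1) \<in> P" unfolding P_def using a1A b1A e by simp
    show "c \<in> G ` (P \<times> ({..<n} \<times> {..<3}))"
    proof (cases "i = j")
      case True
      have "c = G ((a1,b1),(i,0))" unfolding G_def using pq(5) p q True by simp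
      then show ?thesis using PP a1A by force
    next
      case False
      then have "cadj i j" using ij by simp
      then have "j = Suc i mod n \<or> i = Suc j mod n" unfolding cadj_def by simp
      then show ?thesis
      proof
        assume j: "j = Suc i mod n"
        have "c = G ((a1,b1),(i,1))" unfolding G_def using pq(5) p q j by simp
        then show ?thesis using PP a1A by force
      next
        assume i: "i = Suc j mod n"
        have "c = G ((a1,b1),(j,2))" unfolding G_def using pq(5) p q i by simp
        then show ?thesis using PP b1A by force
      qed
    qed
  qed
  have "card (cut X) \<le> card (G ` (P \<times> ({..<n} \<times> {..<3})))"
    by (rule card_mono[OF _ csub]) (use finP in simp)
  also have "\<dots> \<le> card (P \<times> ({..<n} \<times> {..<3::nat}))" by (rule card_image_le) (use finP in simp)
  also have "\<dots> = card P * (n * 3)" by (simp add: card_cartesian_product)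
  also have "\<dots> \<le> edge_conn V E * (n * 3)" using cP cbd by simp
  finally have "card (cut X) \<le> 3 * n * edge_conn V E" by (simp add: mult.commute mult.left_commute)
  then show ?thesis using rec by blast
qed

end

context SP begin

lemma suc0: assumes "j < n" "0 = Suc j mod n" shows "j = n - 1"
proof -
  have "Suc j mod n = (if Suc j = n then 0 else Suc j)" by (rule suc_mod[OF assms(1)])
  then show ?thesis using assms(2) by (auto split: if_splits)
qed

lemma mindeg_in: assumes "V \<noteq> {}" shows "\<exists>x\<in>V. degree E x = min_degree V E"
proof -
  have "min_degree V E \<in> degree E ` V" unfolding min_degree_def
    using finV assms by (intro Min_in) auto
  then show ?thesis by auto
qed

lemma upper2:
  assumes conn: "connected V E" and uv: "u1 \<in> V" "v1 \<in> V" "u1 \<noteq> v1"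
  shows "\<exists>S. restricted_edge_cut VH EH S \<and> card S \<le> 6 * min_degree V E + 2"
proof -
  obtain x where x: "x \<in> V" "degree E x = min_degree V E" using mindeg_in uv by blast
  obtain y where y: "y \<in> V" "y \<noteq> x" using uv by blast
  have "reachable E x y" using conn x y unfolding connected_def by blast
  then have "(x,y) \<in> (edge_rel E)\<^sup>*" unfolding reachable_def .
  then obtain z where "(x,z) \<in> edge_rel E" using y(2) by (metis converse_rtranclE)
  then have xz: "{x,z} \<in> E" unfolding edge_rel_def by simp
  have zV: "z \<in> V" using E_V xz by simp
  have zx: "z \<noteq> x" using xz E_noloop by auto
  have n0: "0 < n" "1 < n" "2 < n" using n3 by auto
  have s0: "Suc 0 mod n = 1" using n3 by simp
  have s1: "Suc 1 mod n = 2" using n3 by simp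
  define X where "X = {(x,0::nat),(x,1)}"
  have XV: "X \<subseteq> VH" unfolding X_def using x n0 VH_mem by simp
  have a: "(x,0) \<in> X" unfolding X_def by simp
  have b: "(x,2) \<in> VH" "(x,2) \<notin> X" unfolding X_def using x n0 VH_mem by auto
  have nb: "\<forall>p\<in>VH. \<exists>q. hadj p q \<and> ((q \<in> X) = (p \<in> X))"
  proof
    fix p assume p: "p \<in> VH"
    obtain w i where wi: "p = (w,i)" by fastforce
    have wV: "w \<in> V" "i < n" using p wi VH_mem by auto
    show "\<exists>q. hadj p q \<and> ((q \<in> X) = (p \<in> X))"
    proof (cases "p = (x,0)")
      case True
      have "hadj (x,0) (x,1)" unfolding hadj_def cadj_def using x n0 s0 by simp
      then show ?thesis using True unfolding X_def by blast
    next
      case F0: False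
      show ?thesis
      proof (cases "p = (x,1)")
        case True
        have "cadj 0 1" unfolding cadj_def using n0 s0 by simp
        then have "hadj (x,1) (x,0)" unfolding hadj_def using x n0 cadj_sym by simp
        then show ?thesis using True unfolding X_def by blast
      next
        case F1: False
        have pX: "p \<notin> X" using F0 F1 unfolding X_def by simp
        show ?thesis
        proof (cases "w = x")
          case True
          have h: "hadj (x,i) (z,i)" unfolding hadj_def using x zV wV xz by simp
          have "(z,i) \<notin> X" unfolding X_def using zx by simp
          then show ?thesis using h pX wi True by blast
        next
          case False
          have h: "hadj (w,i) (w, Suc i mod n)" unfolding hadj_def using wV suc_lt cadj_suc by simp
          have "(w, Suc i mod n) \<notin> X" unfolding X_def using False by simp
          then show ?thesis using h pX wi by blast
        qed
      qed
    qed
  qed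
  have rec: "restricted_edge_cut VH EH (cut X)" by (rule same_side_rec[OF XV a b nb])
  define N where "N = {w. {x,w} \<in> E}"
  have NV: "N \<subseteq> V" unfolding N_def using E_V by auto
  have finN: "finite N" using NV finV finite_subset by blast
  have cN: "card N \<le> degree E x"
  proof -
    have inj: "inj_on (\<lambda>w. {x,w}) N"
    proof (rule inj_onI)
      fix w w' assume "w \<in> N" "w' \<in> N" "{x,w} = {x,w'}"
      then show "w = w'" by (auto simp: doubleton_eq_iff)
    qed
    have "(\<lambda>w. {x,w}) ` N \<subseteq> {e \<in> E. x \<in> e}" unfolding N_def by auto
    then have "card ((\<lambda>w. {x,w}) ` N) \<le> card {e \<in> E. x \<in> e}"
      by (rule card_mono[rotated]) (use finE in simp)
    then show ?thesis unfolding degree_def using card_image[OF inj] by simp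
  qed
  define Q0 where "Q0 = insert (x, n - 1) (N \<times> {0, 1, n - 1})"
  define Q1 where "Q1 = insert (x, 2::nat) (N \<times> {0::nat, 1, 2})"
  have q0: "\<And>z j. hadj (x,0) (z,j) \<Longrightarrow> (z,j) \<notin> X \<Longrightarrow> (z,j) \<in> Q0"
  proof -
    fix z j assume h: "hadj (x,0) (z,j)" and nX: "(z,j) \<notin> X"
    have jn: "j < n" using h unfolding hadj_def by simp
    show "(z,j) \<in> Q0"
    proof (cases "z = x")
      case True
      then have "cadj 0 j" using h E_noloop unfolding hadj_def by auto
      then have "j = 1 \<or> 0 = Suc j mod n" unfolding cadj_def using s0 by auto
      moreover have "j \<noteq> 1" using nX True unfolding X_def by auto
      ultimately have "0 = Suc j mod n" by simp
      then have "j = n - 1" using suc0 jn by simp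
      then show ?thesis using True unfolding Q0_def by simp
    next
      case False
      then have zN: "z \<in> N" using h unfolding hadj_def N_def by auto
      have "j = 0 \<or> cadj 0 j" using h False unfolding hadj_def by auto
      then have "j = 0 \<or> j = 1 \<or> 0 = Suc j mod n" unfolding cadj_def using s0 by auto
      moreover have "0 = Suc j mod n \<Longrightarrow> j = n - 1"
      proof -
        assume "0 = Suc j mod n"
        then show "j = n - 1" using suc0 jn by simp
      qed
      ultimately have "j \<in> {0, 1, n - 1}" by auto
      then show ?thesis using zN unfolding Q0_def by simp
    qed
  qed
  have q1: "\<And>z j. hadj (x,1) (z,j) \<Longrightarrow> (z,j) \<notin> X \<Longrightarrow> (z,j) \<in> Q1"
  proof -
    fix z j assume h: "hadj (x,1) (z,j)" and nX: "(z,j) \<notin> X"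
    have jn: "j < n" using h unfolding hadj_def by simp
    have sj: "1 = Suc j mod n \<Longrightarrow> j = 0"
    proof -
      assume a1: "1 = Suc j mod n"
      show "j = 0"
      proof (cases "Suc j = n")
        case True then show ?thesis using a1 by simp
      next
        case False then have "Suc j < n" using jn by simp
        then show ?thesis using a1 by simp
      qed
    qed
    show "(z,j) \<in> Q1"
    proof (cases "z = x")
      case True
      then have "cadj 1 j" using h E_noloop unfolding hadj_def by auto
      then have "j = 2 \<or> 1 = Suc j mod n" unfolding cadj_def using s1 by auto
      moreover have "j \<noteq> 0" using nX True unfolding X_def by auto
      ultimately have "j = 2" using sj by auto
      then show ?thesis using True unfolding Q1_def by simp
    next
      case False
      then have zN: "z \<in> N" using h unfolding hadj_def N_def by auto
      have "j = 1 \<or> cadj 1 j" using h False unfolding hadj_def by auto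
      then have "j = 1 \<or> j = 2 \<or> 1 = Suc j mod n" unfolding cadj_def using s1 by auto
      then have "j \<in> {0, 1, 2}" using sj by auto
      then show ?thesis using zN unfolding Q1_def by simp
    qed
  qed
  have csub: "cut X \<subseteq> (\<lambda>q. {(x,0),q}) ` Q0 \<union> (\<lambda>q. {(x,1),q}) ` Q1"
  proof
    fix c assume "c \<in> cut X"
    then obtain p q where pq: "c \<in> EH" "p \<in> X" "q \<in> VH" "q \<notin> X" "c = {p,q}" unfolding cut_def by blast
    obtain z j where q: "q = (z,j)" by fastforce
    have h: "hadj p (z,j)" using pq(1,5) q EH_iff by simp
    have "p = (x,0) \<or> p = (x,1)" using pq(2) unfolding X_def by simp
    then show "c \<in> (\<lambda>q. {(x,0),q}) ` Q0 \<union> (\<lambda>q. {(x,1),q}) ` Q1"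
    proof
      assume p0: "p = (x,0)"
      then have "(z,j) \<in> Q0" using q0 h pq(4) q by simp
      then show ?thesis using pq(5) p0 q by blast
    next
      assume p1: "p = (x,1)"
      then have "(z,j) \<in> Q1" using q1 h pq(4) q by simp
      then show ?thesis using pq(5) p1 q by blast
    qed
  qed
  have fQ: "finite Q0" "finite Q1" unfolding Q0_def Q1_def using finN by auto
  have cQ0: "card Q0 \<le> 3 * card N + 1"
  proof -
    have "card Q0 \<le> Suc (card (N \<times> {0, 1, n - 1}))" unfolding Q0_def
      using finN by (simp add: card_insert_if)
    moreover have "card (N \<times> {0, 1, n - 1}) = card N * card {0, 1, n - 1::nat}"
      by (rule card_cartesian_product)
    moreover have "card N * card {0, 1, n - 1::nat} \<le> card N * 3" using card3 by (rule mult_le_mono2)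
    ultimately show ?thesis by linarith
  qed
  have cQ1: "card Q1 \<le> 3 * card N + 1"
  proof -
    have "card Q1 \<le> Suc (card (N \<times> {0::nat, 1, 2}))" unfolding Q1_def
      using finN by (simp add: card_insert_if)
    moreover have "card (N \<times> {0::nat, 1, 2}) = card N * card {0, 1, 2::nat}"
      by (rule card_cartesian_product)
    moreover have "card N * card {0, 1, 2::nat} \<le> card N * 3" using card3 by (rule mult_le_mono2)
    ultimately show ?thesis by linarith
  qed
  have "card (cut X) \<le> card ((\<lambda>q. {(x,0),q}) ` Q0 \<union> (\<lambda>q. {(x,1),q}) ` Q1)"
    by (rule card_mono[OF _ csub]) (use fQ in simp)
  also have "\<dots> \<le> card ((\<lambda>q. {(x,0),q}) ` Q0) + card ((\<lambda>q. {(x,1),q}) ` Q1)" by (rule card_Un_le)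
  also have "\<dots> \<le> card Q0 + card Q1" using card_image_le[OF fQ(1)] card_image_le[OF fQ(2)] by (rule add_le_mono)
  finally have "card (cut X) \<le> 6 * card N + 2" using cQ0 cQ1 by linarith
  then have "card (cut X) \<le> 6 * min_degree V E + 2" using cN x(2) by linarith
  then show ?thesis using rec by blast
qed

end

lemma arith6: "(p::nat) + d \<le> q \<Longrightarrow> d \<le> p \<Longrightarrow> q \<le> 2 * c \<Longrightarrow> d + 1 \<le> m \<Longrightarrow> 6 * d + 2 \<le> 2 * (m + 2 * c)"
  by presburger

context SP begin

lemma handshake: "(\<Sum>v\<in>V. degree E v) = 2 * card E"
proof -
  have fB: "\<forall>v\<in>V. finite {e \<in> E. v \<in> e}" using finE by auto
  have "(\<Sum>v\<in>V. degree E v) = card (SIGMA v:V. {e \<in> E. v \<in> e})"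
    unfolding degree_def using card_SigmaI[OF finV fB] by simp
  also have "\<dots> = card (prod.swap ` (SIGMA v:V. {e \<in> E. v \<in> e}))"
    by (rule card_image[symmetric]) (simp add: inj_on_def)
  also have "prod.swap ` (SIGMA v:V. {e \<in> E. v \<in> e}) = (SIGMA e:E. {v \<in> V. v \<in> e})"
    by auto
  also have "card (SIGMA e:E. {v \<in> V. v \<in> e}) = (\<Sum>e\<in>E. card {v \<in> V. v \<in> e})"
  proof -
    have "\<forall>e\<in>E. finite {v \<in> V. v \<in> e}" using finV by simp
    then show ?thesis by (rule card_SigmaI[OF finE])
  qed
  also have "\<dots> = (\<Sum>e\<in>E. 2)"
  proof (rule sum.cong[OF refl])
    fix e assume e: "e \<in> E"
    obtain a b where ab: "a \<in> V" "b \<in> V" "a \<noteq> b" "e = {a,b}" using E_two[OF e] by blast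
    have "{v \<in> V. v \<in> e} = {a,b}" using ab by auto
    then show "card {v \<in> V. v \<in> e} = 2" using ab(3) by simp
  qed
  finally show ?thesis by simp
qed

lemma deg_bound: assumes Vne: "V \<noteq> {}" shows "6 * min_degree V E + 2 \<le> 2 * (card V + 2 * card E)"
proof -
  define d where "d = min_degree V E"
  define m where "m = card V"
  have "d * m \<le> (\<Sum>v\<in>V. degree E v)" unfolding m_def d_def
    by (rule sum_ge_const[OF finV mindeg_le])
  then have "m * d \<le> (\<Sum>v\<in>V. degree E v)" by (simp add: mult.commute)
  then have md: "m * d \<le> 2 * card E" using handshake by simp
  obtain x where x: "x \<in> V" using Vne by blast
  have "{e \<in> E. x \<in> e} \<subseteq> (\<lambda>w. {x,w}) ` (V - {x})"
  proof
    fix e assume "e \<in> {e \<in> E. x \<in> e}"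
    then have e: "e \<in> E" "x \<in> e" by simp_all
    obtain w where "w \<in> V" "w \<noteq> x" "e = {x,w}" using E_other[OF e] by blast
    then show "e \<in> (\<lambda>w. {x,w}) ` (V - {x})" by blast
  qed
  then have "degree E x \<le> card ((\<lambda>w. {x,w}) ` (V - {x}))" unfolding degree_def
    by (rule card_mono[rotated]) (use finV in simp)
  also have "\<dots> \<le> card (V - {x})" by (rule card_image_le) (use finV in simp)
  also have "\<dots> = m - 1" unfolding m_def using x finV by simp
  finally have "d \<le> m - 1" using mindeg_le[OF x] unfolding d_def by linarith
  moreover have "card V > 0" using x finV card_gt_0_iff by blast
  then have "m \<ge> 1" unfolding m_def by simp
  ultimately have dm: "d + 1 \<le> m" by linarith
  have "(d + 1) * d \<le> m * d" using dm by (rule mult_le_mono1)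
  then have "d * d + d \<le> m * d" by (simp add: algebra_simps)
  moreover have "d \<le> d * d" by (rule le_square)
  ultimately have "6 * d + 2 \<le> 2 * (m + 2 * card E)" using md dm by (rule arith6)
  then show ?thesis unfolding d_def m_def .
qed

end

theorem theorem3p4:
  fixes V :: "'a set" and E :: "'a set set" and n :: nat
  assumes "graph V E" and "connected V E" and "card V \<ge> 2" and "n \<ge> 3"
  shows "restricted_edge_conn (sp_verts V (cycle_verts n))
           (sp_edges V E (cycle_verts n) (cycle_edges n))
         = min (3 * n * edge_conn V E)
               (min (2 * (card V + 2 * card E)) (6 * min_degree V E + 2))"
proof -
  interpret SP V E n using assms(1,4) by unfold_locales
  have Vne: "V \<noteq> {}" using assms(3) by auto
  obtain u1 where u1: "u1 \<in> V" using Vne by blast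
  have "card (V - {u1}) \<ge> 1" using assms(3) u1 finV by simp
  then have "0 < card (V - {u1})" by simp
  then have "V - {u1} \<noteq> {}" using card_gt_0_iff by blast
  then obtain v1 where v1: "v1 \<in> V" "v1 \<noteq> u1" by blast
  define L where "L = min (3 * n * edge_conn V E) (6 * min_degree V E + 2)"
  define K where "K = {card S |S. restricted_edge_cut VH EH S}"
  have finK: "finite K"
  proof -
    have "K \<subseteq> card ` Pow EH" unfolding K_def restricted_edge_cut_def by auto
    moreover have "finite (card ` Pow EH)" using finEH by simp
    ultimately show ?thesis by (rule finite_subset)
  qed
  obtain S1 where S1: "restricted_edge_cut VH EH S1" "card S1 \<le> 3 * n * edge_conn V E"
    using upper1[OF u1 v1(1) v1(2)[symmetric]] by blast
  obtain S2 where S2: "restricted_edge_cut VH EH S2" "card S2 \<le> 6 * min_degree V E + 2"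
    using upper2[OF assms(2) u1 v1(1) v1(2)[symmetric]] by blast
  have K1: "card S1 \<in> K" "card S2 \<in> K" unfolding K_def using S1(1) S2(1) by auto
  then have Kne: "K \<noteq> {}" by auto
  have ge: "L \<le> Min K"
  proof -
    have "\<forall>k\<in>K. L \<le> k" unfolding K_def L_def using lower[OF _ Vne] by auto
    then show ?thesis using Min_ge_iff[OF finK Kne] by simp
  qed
  have le1: "Min K \<le> card S1" using Min_le[OF finK K1(1)] .
  have le2: "Min K \<le> card S2" using Min_le[OF finK K1(2)] .
  have "Min K \<le> L" unfolding L_def using le1 le2 S1(2) S2(2) by linarith
  then have eq: "Min K = L" using ge by simp
  have "restricted_edge_conn VH EH = L" unfolding restricted_edge_conn_def K_def[symmetric] using eq .
  moreover have "L = min (3 * n * edge_conn V E) (min (2 * (card V + 2 * card E)) (6 * min_degree V E + 2))"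
    unfolding L_def using deg_bound[OF Vne] by linarith
  ultimately show ?thesis by simp
qed


end
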